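(* Let $k,l\ge0$ be integers. The decomposition $$\mathcal{P}_{k,l}(\mathbb{R}^{2m},\mathbb{C})=\bigoplus_{a,b}|x|^{2a}|u|^{2b}\Big(\mathcal{P}_{k-2a,l-2b}\cap\ker(\Delta_x,\Delta_u)\Big),\qquad \mathcal{P}_{p,q}\cap\ker(\Delta_x,\Delta_u)=\bigoplus_{i,j}C^iS_u^j\,\mathcal{H}_{p-i+j,q-i-j},$$ i.e. the full decomposition of $\mathcal{P}_{k,l}(\mathbb{R}^{2m},\mathbb{C})$ into the subspaces $|x|^{2a}|u|^{2b}C^iS_u^j\mathcal{H}_{k-2a-i+j,\,l-2b-i-j}$, which are irreducible under the orthogonal group, is a decomposition into mutually orthogonal subspaces with respect to the Fischer inner product.
   Context: Fix an integer $m>4$. For $x,u\in\mathbb{R}^m$ let $\mathcal{P}_{p,q}(\mathbb{R}^{2m},\mathbb{C})$ be complex polynomials of degree $p$ in $x$ and $q$ in $u$; $\mathrm{SO}(m)$ acts by $(g\cdot P)(x,u)=P(g^{-1}x,g^{-1}u)$. The Fischer inner product is $[P,Q]_F=\overline{P}(\partial_x,\partial_u)Q(x,u)\big|_{x=u=0}$ ($\overline{P}(\partial_x,\partial_u)$: conjugate coefficients of $P$ and replace $x_j,u_j$ by $\partial_{x_j},\partial_{u_j}$). Write $|x|^2=\sum x_j^2$, $\langle u,x\rangle=\sum u_jx_j$, $\Delta_x=\sum\partial_{x_j}^2$, $\Delta_u=\sum\partial_{u_j}^2$, $\langle\partial_u,\partial_x\rangle=\sum\partial_{u_j}\partial_{x_j}$,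 $\langle x,\partial_u\rangle=\sum x_j\partial_{u_j}$, $\langle u,\partial_x\rangle=\sum u_j\partial_{x_j}$, $\ker(D_1,\dots,D_r)=\bigcap\ker D_i$. Every $P\in\mathcal{P}_{p,q}$ is uniquely $\sum_{a,b\ge0}|x|^{2a}|u|^{2b}H'_{p-2a,q-2b}$ with $H'_{p-2a,q-2b}\in\mathcal{P}_{p-2a,q-2b}\cap\ker(\Delta_x,\Delta_u)$; $\pi_{\mathfrak{s}}P:=H'_{p,q}$. On $\ker(\Delta_x,\Delta_u)$: $S_u=\pi_{\mathfrak{s}}\langle u,\partial_x\rangle$, $C=\pi_{\mathfrak{s}}\langle u,x\rangle$. Simplicial harmonics $\mathcal{H}_{a,b}=\mathcal{P}_{a,b}\cap\ker(\Delta_x,\Delta_u,\langle\partial_u,\partial_x\rangle,\langle x,\partial_u\rangle)$; $\mathcal{H}_{a,b}=\{0\}$ if an index is negative. The inner decomposition runs over $0\le i\le\min(p,q)$, $0\le j\le \min(p,q)-i$ (only nonzero summands matter). *)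

theory Defs
  imports Complex_Main "HOL-Library.Poly_Mapping"
begin

text \<open>For fixed m, the variable
with index j < m is x_(j+1) and the variable with index m+j (j < m) is u_(j+1).\<close>

type_synonym cpoly = "(nat \<Rightarrow>\<^sub>0 nat) \<Rightarrow>\<^sub>0 complex"

definition var :: "nat \<Rightarrow> cpoly" where
  "var i = Poly_Mapping.single (Poly_Mapping.single i 1) 1"

definition const :: "complex \<Rightarrow> cpoly" where
  "const c = Poly_Mapping.single 0 c"

definition pderiv :: "nat \<Rightarrow> cpoly \<Rightarrow> cpoly" where
  "pderiv i P = (\<Sum>\<alpha>\<in>Poly_Mapping.keys P. if 0 < Poly_Mapping.lookup (\<alpha> :: nat \<Rightarrow>\<^sub>0 nat) i
      then Poly_Mapping.single (\<alpha> - Poly_Mapping.single i 1) (of_nat (Poly_Mapping.lookup \<alpha> i) * Poly_Mapping.lookup (P :: cpoly) \<alpha>)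
      else 0)"

definition dmono :: "(nat \<Rightarrow>\<^sub>0 nat) \<Rightarrow> cpoly \<Rightarrow> cpoly" where
  "dmono \<alpha> Q = fold (\<lambda>i R. (pderiv i ^^ Poly_Mapping.lookup \<alpha> i) R) (sorted_list_of_set (Poly_Mapping.keys \<alpha>)) Q"

text \<open>Fischer inner product: apply conj(P)(\<partial>) to Q and evaluate at 0.\<close>
definition fischer :: "cpoly \<Rightarrow> cpoly \<Rightarrow> complex" where
  "fischer P Q = Poly_Mapping.lookup (\<Sum>\<alpha>\<in>Poly_Mapping.keys P. const (cnj (Poly_Mapping.lookup P \<alpha>)) * dmono \<alpha> Q) 0"

definition X :: "nat \<Rightarrow> nat \<Rightarrow> cpoly" where "X m j = var j"
definition U :: "nat \<Rightarrow> nat \<Rightarrow> cpoly" where "U m j = var (m + j)"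

definition normx :: "nat \<Rightarrow> cpoly" where "normx m = (\<Sum>j<m. X m j ^ 2)"
definition normu :: "nat \<Rightarrow> cpoly" where "normu m = (\<Sum>j<m. U m j ^ 2)"
definition ux :: "nat \<Rightarrow> cpoly" where "ux m = (\<Sum>j<m. U m j * X m j)"

definition lap_x :: "nat \<Rightarrow> cpoly \<Rightarrow> cpoly" where
  "lap_x m P = (\<Sum>j<m. pderiv j (pderiv j P))"
definition lap_u :: "nat \<Rightarrow> cpoly \<Rightarrow> cpoly" where
  "lap_u m P = (\<Sum>j<m. pderiv (m + j) (pderiv (m + j) P))"
definition du_dx :: "nat \<Rightarrow> cpoly \<Rightarrow> cpoly" where
  "du_dx m P = (\<Sum>j<m. pderiv (m + j) (pderiv j P))"
definition x_du :: "nat \<Rightarrow> cpoly \<Rightarrow> cpoly" where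
  "x_du m P = (\<Sum>j<m. X m j * pderiv (m + j) P)"
definition u_dx :: "nat \<Rightarrow> cpoly \<Rightarrow> cpoly" where
  "u_dx m P = (\<Sum>j<m. U m j * pderiv j P)"

definition Pspace :: "nat \<Rightarrow> nat \<Rightarrow> nat \<Rightarrow> cpoly set" where
  "Pspace m p q = {P. \<forall>\<alpha>\<in>Poly_Mapping.keys P. Poly_Mapping.keys \<alpha> \<subseteq> {..<2*m}
      \<and> (\<Sum>j<m. Poly_Mapping.lookup \<alpha> j) = p \<and> (\<Sum>j<m. Poly_Mapping.lookup \<alpha> (m + j)) = q}"

definition Kerlap :: "nat \<Rightarrow> nat \<Rightarrow> nat \<Rightarrow> cpoly set" where
  "Kerlap m p q = {P \<in> Pspace m p q. lap_x m P = 0 \<and> lap_u m P = 0}"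

definition Harm :: "nat \<Rightarrow> nat \<Rightarrow> nat \<Rightarrow> cpoly set" where
  "Harm m a b = {P \<in> Pspace m a b. lap_x m P = 0 \<and> lap_u m P = 0
      \<and> du_dx m P = 0 \<and> x_du m P = 0}"

text \<open>\<pi>_s on P_{p,q}: the component H'_{p,q} of the unique decomposition
P = \<Sum>_{a,b} |x|^{2a} |u|^{2b} H'_{p-2a,q-2b}.\<close>
definition pis :: "nat \<Rightarrow> nat \<Rightarrow> nat \<Rightarrow> cpoly \<Rightarrow> cpoly" where
  "pis m p q P = (THE H. \<exists>Hs. (\<forall>a\<le>p div 2. \<forall>b\<le>q div 2. Hs a b \<in> Kerlap m (p - 2*a) (q - 2*b))
      \<and> P = (\<Sum>a\<le>p div 2. \<Sum>b\<le>q div 2. normx m ^ a * normu m ^ b * Hs a b)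
      \<and> H = Hs 0 0)"

fun su_iter :: "nat \<Rightarrow> nat \<Rightarrow> nat \<Rightarrow> nat \<Rightarrow> cpoly \<Rightarrow> cpoly" where
  "su_iter m 0 p0 q0 H = H"
| "su_iter m (Suc j) p0 q0 H = pis m (p0 - Suc j) (q0 + Suc j) (u_dx m (su_iter m j p0 q0 H))"

fun c_iter :: "nat \<Rightarrow> nat \<Rightarrow> nat \<Rightarrow> nat \<Rightarrow> cpoly \<Rightarrow> cpoly" where
  "c_iter m 0 p1 q1 H = H"
| "c_iter m (Suc i) p1 q1 H = pis m (p1 + Suc i) (q1 + Suc i) (ux m * c_iter m i p1 q1 H)"

definition Idx :: "nat \<Rightarrow> nat \<Rightarrow> (nat \<times> nat \<times> nat \<times> nat) set" where
  "Idx k l = {(a, b, i, j). 2*a \<le> k \<and> 2*b \<le> l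
      \<and> i \<le> min (k - 2*a) (l - 2*b) \<and> j \<le> min (k - 2*a) (l - 2*b) - i}"

definition Vsub :: "nat \<Rightarrow> nat \<Rightarrow> nat \<Rightarrow> nat \<times> nat \<times> nat \<times> nat \<Rightarrow> cpoly set" where
  "Vsub m k l t = (case t of (a, b, i, j) \<Rightarrow>
     (let p = k - 2*a; q = l - 2*b in
      {normx m ^ a * normu m ^ b *
         c_iter m i (p - i) (q - i) (su_iter m j (p - i + j) (q - i - j) H)
       | H. H \<in> Harm m (p - i + j) (q - i - j)}))"

end

theory Submission
  imports Defs
begin


abbreviation lk :: "('a \<Rightarrow>\<^sub>0 'b::zero) \<Rightarrow> 'a \<Rightarrow> 'b" where "lk \<equiv> Poly_Mapping.lookup"
abbreviation ee :: "nat \<Rightarrow> nat \<Rightarrow>\<^sub>0 nat" where "ee i \<equiv> Poly_Mapping.single i 1"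

lemma lookup_single_mult_gen:
  "lk (Poly_Mapping.single g c * (P::cpoly)) b =
     (if (\<exists>q. b = g + q) then c * lk P (b - g) else 0)"
proof -
  have "lk (Poly_Mapping.single g c * P) b =
     (\<Sum>l. lk (Poly_Mapping.single g c) l * (\<Sum>q. lk P q when b = l + q))"
    by (rule lookup_mult)
  also have "\<dots> = c * (\<Sum>q. lk P q when b = g + q)"
  proof -
    have "(\<Sum>l. lk (Poly_Mapping.single g c) l * (\<Sum>q. lk P q when b = l + q))
       = (\<Sum>l. (c * (\<Sum>q. lk P q when b = l + q)) when g = l)"
      by (rule Sum_any.cong) (simp add: lookup_single when_def)
    also have "\<dots> = c * (\<Sum>q. lk P q when b = g + q)" by simp
    finally show ?thesis .
  qed
  also have "\<dots> = (if (\<exists>q. b = g + q) then c * lk P (b - g) else 0)"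
  proof (cases "\<exists>q. b = g + q")
    case True
    then obtain q0 where q0: "b = g + q0" by blast
    have "(\<Sum>q. lk P q when b = g + q) = (\<Sum>q. lk P q0 when q = q0)"
      by (rule Sum_any.cong) (auto simp: q0 when_def)
    also have "\<dots> = lk P q0" by simp
    finally show ?thesis using True q0 by simp
  next
    case False
    then show ?thesis by (simp add: when_def)
  qed
  finally show ?thesis .
qed

lemma ex_add_ee: "(\<exists>q. b = ee i + q) \<longleftrightarrow> 0 < lk b i"
proof
  assume "\<exists>q. b = ee i + q" then show "0 < lk b i" by (auto simp: lookup_add)
next
  assume "0 < lk b i"
  then have "b = ee i + (b - ee i)"
    by (intro poly_mapping_eqI) (auto simp: lookup_add lookup_minus lookup_single when_def)
  then show "\<exists>q. b = ee i + q" by blast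
qed

lemma lookup_var_mult:
  "lk (var i * P) b = (if 0 < lk b i then lk P (b - ee i) else 0)"
  unfolding var_def lookup_single_mult_gen ex_add_ee by simp

lemma lookup_const_mult [simp]: "lk (const c * P) b = c * lk P b"
  unfolding const_def lookup_single_mult_gen by simp

lemma ee_add_minus [simp]: "(a + ee i) - ee i = a"
  by (rule poly_mapping_eqI) (simp add: lookup_add lookup_minus)
lemma ee_minus_add: "0 < lk a i \<Longrightarrow> a - ee i + ee i = a"
  by (rule poly_mapping_eqI) (auto simp: lookup_add lookup_minus lookup_single when_def)
lemma lk_minus_ee: "lk (a - ee i) j = (if j = i then lk a j - 1 else lk a j)"
  by (auto simp: lookup_minus lookup_single when_def)
lemma lk_plus_ee: "lk (a + ee i) j = (if j = i then lk a j + 1 else lk a j)"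
  by (auto simp: lookup_add lookup_single when_def)

lemmas ee_add_minus' [simp] = ee_add_minus[unfolded One_nat_def]
lemmas ee_minus_add' = ee_minus_add[unfolded One_nat_def]
lemmas lk_minus_ee' = lk_minus_ee[unfolded One_nat_def]
lemmas lk_plus_ee' = lk_plus_ee[unfolded One_nat_def]
lemmas ee_simps = ee_minus_add ee_minus_add' lk_minus_ee lk_minus_ee' lk_plus_ee lk_plus_ee'

lemma lookup_pderiv:
  "lk (pderiv i P) a = of_nat (lk a i + 1) * lk P (a + ee i)"
proof -
  have eq: "(0 < lk al i \<and> al - ee i = a) \<longleftrightarrow> al = a + ee i" for al :: "nat \<Rightarrow>\<^sub>0 nat"
  proof
    assume h: "0 < lk al i \<and> al - ee i = a"
    show "al = a + ee i"
      using h by (intro poly_mapping_eqI) (auto simp: lookup_add lookup_minus lookup_single when_def)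
  next
    assume "al = a + ee i" then show "0 < lk al i \<and> al - ee i = a"
      by (auto simp: lookup_add intro!: poly_mapping_eqI simp: lookup_minus)
  qed
  have "lk (pderiv i P) a = (\<Sum>al\<in>Poly_Mapping.keys P. if al = a + ee i
        then of_nat (lk al i) * lk P al else 0)"
    unfolding pderiv_def lookup_sum
    apply (rule sum.cong[OF refl])
    subgoal for al using eq[of al] by (auto simp: lookup_single when_def)
    done
  also have "\<dots> = of_nat (lk a i + 1) * lk P (a + ee i)"
    by (simp add: sum.delta ee_simps in_keys_iff)
  finally show ?thesis .
qed

lemma pderiv_add [simp]: "pderiv i (P + Q) = pderiv i P + pderiv i Q"
  by (rule poly_mapping_eqI) (simp add: lookup_pderiv lookup_add algebra_simps)
lemma pderiv_diff [simp]: "pderiv i (P - Q) = pderiv i P - pderiv i Q"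
  by (rule poly_mapping_eqI) (simp add: lookup_pderiv lookup_minus algebra_simps)
lemma pderiv_uminus [simp]: "pderiv i (- P) = - pderiv i P"
  by (rule poly_mapping_eqI) (simp add: lookup_pderiv)
lemma pderiv_zero [simp]: "pderiv i 0 = 0"
  by (rule poly_mapping_eqI) (simp add: lookup_pderiv)
lemma pderiv_const_mult [simp]: "pderiv i (const c * P) = const c * pderiv i P"
  by (rule poly_mapping_eqI) (simp add: lookup_pderiv)
lemma pderiv_sum [simp]: "pderiv i (sum F S) = (\<Sum>s\<in>S. pderiv i (F s))"
  by (induction S rule: infinite_finite_induct) auto
lemma pderiv_comm: "pderiv i (pderiv j P) = pderiv j (pderiv i P)"
  by (rule poly_mapping_eqI)
     (simp add: lookup_pderiv lookup_add lookup_single when_def ac_simps)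

lemma pderiv_var_mult:
  "pderiv i (var j * P) = (if i = j then P else 0) + var j * pderiv i P"
proof (rule poly_mapping_eqI)
  fix a
  show "lk (pderiv i (var j * P)) a = lk ((if i = j then P else 0) + var j * pderiv i P) a"
  proof (cases "i = j")
    case True
    have "lk (pderiv i (var j * P)) a = of_nat (lk a i + 1) * lk P a"
      using True by (simp add: lookup_pderiv lookup_var_mult ee_simps)
    moreover have "lk (var j * pderiv i P) a = (if 0 < lk a i then of_nat (lk a i) * lk P a else 0)"
      using True by (simp add: lookup_pderiv lookup_var_mult ee_simps)
    ultimately show ?thesis using True by (simp add: lookup_add algebra_simps)
  next
    case False
    have e: "0 < lk a j \<Longrightarrow> a + ee i - ee j = a - ee j + ee i"
      using False by (intro poly_mapping_eqI) (auto simp: lookup_add lookup_minus lookup_single when_def)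
    show ?thesis using False
      by (auto simp: lookup_pderiv lookup_var_mult lookup_add ee_simps e e[unfolded One_nat_def] lookup_single when_def)
  qed
qed

lemma const_mult_const [simp]: "const a * const b = const (a * b)"
  by (simp add: const_def mult_single)
lemma const_add: "const (a + b) = const a + const b"
  by (simp add: const_def single_add)
lemma const_one [simp]: "const 1 = 1" by (simp add: const_def)
lemma const_zero [simp]: "const 0 = 0" by (simp add: const_def)
lemma numeral_const: "(numeral n :: cpoly) = const (numeral n)" by (simp add: const_def)
lemma of_nat_const: "(of_nat n :: cpoly) = const (of_nat n)" by (simp add: const_def)

lemma pderiv_numeral_mult [simp]: "pderiv i (numeral n * P) = numeral n * pderiv i P"
  by (simp add: numeral_const)
lemma pderiv_of_nat_mult [simp]: "pderiv i (of_nat n * P) = of_nat n * pderiv i P"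
  by (simp add: of_nat_const)


definition mf :: "(nat \<Rightarrow>\<^sub>0 nat) \<Rightarrow> nat" where
  "mf a = (\<Prod>j\<in>Poly_Mapping.keys a. fact (lk a j))"

lemma mf_superset: "finite K \<Longrightarrow> Poly_Mapping.keys a \<subseteq> K \<Longrightarrow> mf a = (\<Prod>j\<in>K. fact (lk a j))"
  unfolding mf_def by (rule prod.mono_neutral_left) (auto simp: in_keys_iff)

lemma mf_pos: "0 < mf a"
  unfolding mf_def by (simp add: prod_pos)

lemma mf_add_ee: "mf (a + ee i) = (lk a i + 1) * mf a"
proof -
  let ?K = "insert i (Poly_Mapping.keys a)"
  have k1: "Poly_Mapping.keys (a + ee i) \<subseteq> ?K"
    using keys_add[of a "ee i"] by auto
  have "mf (a + ee i) = (\<Prod>j\<in>?K. fact (lk (a + ee i) j))"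
    by (rule mf_superset) (use k1 in auto)
  also have "\<dots> = fact (lk a i + 1) * (\<Prod>j\<in>?K - {i}. fact (lk (a + ee i) j))"
    by (subst prod.remove[of _ i]) (auto simp: ee_simps)
  also have "(\<Prod>j\<in>?K - {i}. fact (lk (a + ee i) j)) = (\<Prod>j\<in>?K - {i}. fact (lk a j))"
    by (rule prod.cong) (auto simp: ee_simps)
  also have "mf a = fact (lk a i) * (\<Prod>j\<in>?K - {i}. fact (lk a j))"
  proof -
    have "mf a = (\<Prod>j\<in>?K. fact (lk a j))" by (rule mf_superset) auto
    also have "\<dots> = fact (lk a i) * (\<Prod>j\<in>?K - {i}. fact (lk a j))" by (rule prod.remove) auto
    finally show ?thesis .
  qed
  ultimately show ?thesis by (simp add: algebra_simps)
qed

lemma lookup_pderiv_pow: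
  "lk ((pderiv i ^^ n) Q) b = pochhammer (of_nat (lk b i) + 1) n * lk Q (b + Poly_Mapping.single i n)"
proof (induction n arbitrary: b)
  case 0
  then show ?case by simp
next
  case (Suc n)
  have "lk ((pderiv i ^^ Suc n) Q) b = of_nat (lk b i + 1) * lk ((pderiv i ^^ n) Q) (b + ee i)"
    by (simp add: lookup_pderiv)
  also have "\<dots> = of_nat (lk b i + 1) * (pochhammer (of_nat (lk b i) + 2) n *
      lk Q (b + ee i + Poly_Mapping.single i n))"
    by (simp add: Suc ee_simps add_ac)
  also have "b + ee i + Poly_Mapping.single i n = b + Poly_Mapping.single i (Suc n)"
    by (simp add: add.assoc single_add[symmetric])
  also have "of_nat (lk b i + 1) * (pochhammer (of_nat (lk b i) + 2) n * lk Q (b + Poly_Mapping.single i (Suc n)))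
      = pochhammer (of_nat (lk b i) + 1) (Suc n) * lk Q (b + Poly_Mapping.single i (Suc n))"
    by (simp add: pochhammer_rec add_ac)
  finally show ?case .
qed

lemma lookup_fold_pderiv:
  assumes "distinct ks"
  shows "lk (fold (\<lambda>i R. (pderiv i ^^ lk a i) R) ks Q) b =
     (\<Prod>i\<in>set ks. pochhammer (of_nat (lk b i) + 1) (lk a i)) *
     lk Q (b + (\<Sum>i\<in>set ks. Poly_Mapping.single i (lk a i)))"
  using assms
proof (induction ks arbitrary: Q)
  case Nil
  then show ?case by simp
next
  case (Cons k ks)
  have nk: "k \<notin> set ks" using Cons.prems by simp
  let ?S = "(\<Sum>i\<in>set ks. Poly_Mapping.single i (lk a i))"
  have Sk: "lk (b + ?S) k = lk b k"
    using nk by (simp add: lookup_add lookup_sum lookup_single when_def)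
  have "lk (fold (\<lambda>i R. (pderiv i ^^ lk a i) R) (k # ks) Q) b =
     lk (fold (\<lambda>i R. (pderiv i ^^ lk a i) R) ks ((pderiv k ^^ lk a k) Q)) b" by simp
  also have "\<dots> = (\<Prod>i\<in>set ks. pochhammer (of_nat (lk b i) + 1) (lk a i)) *
     lk ((pderiv k ^^ lk a k) Q) (b + ?S)"
    using Cons by simp
  also have "\<dots> = (\<Prod>i\<in>set ks. pochhammer (of_nat (lk b i) + 1) (lk a i)) *
     (pochhammer (of_nat (lk b k) + 1) (lk a k) * lk Q (b + ?S + Poly_Mapping.single k (lk a k)))"
    by (simp add: lookup_pderiv_pow Sk)
  also have "b + ?S + Poly_Mapping.single k (lk a k) = b + (\<Sum>i\<in>set (k#ks). Poly_Mapping.single i (lk a i))"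
    using nk by (simp add: add_ac)
  finally show ?case using nk by (simp add: ac_simps)
qed

lemma sum_single_keys: "(\<Sum>i\<in>Poly_Mapping.keys a. Poly_Mapping.single i (lk a i)) = a"
  by (rule poly_mapping_eqI) (simp add: lookup_sum lookup_single when_def in_keys_iff sum.delta)

lemma lookup_dmono0: "lk (dmono a Q) 0 = of_nat (mf a) * lk Q a"
proof -
  have "lk (dmono a Q) 0 = (\<Prod>i\<in>Poly_Mapping.keys a. pochhammer 1 (lk a i)) * lk Q a"
    unfolding dmono_def
    by (subst lookup_fold_pderiv) (simp_all add: sum_single_keys)
  also have "(\<Prod>i\<in>Poly_Mapping.keys a. pochhammer (1::complex) (lk a i)) = of_nat (mf a)"
    by (simp add: mf_def of_nat_prod flip: pochhammer_fact)
  finally show ?thesis .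
qed

lemma fischer_keys: "fischer P Q = (\<Sum>a\<in>Poly_Mapping.keys P. cnj (lk P a) * of_nat (mf a) * lk Q a)"
  unfolding fischer_def lookup_sum by (simp add: lookup_dmono0 mult.assoc)

lemma fischer_alt:
  assumes "finite S" "Poly_Mapping.keys P \<subseteq> S"
  shows "fischer P Q = (\<Sum>a\<in>S. cnj (lk P a) * of_nat (mf a) * lk Q a)"
  unfolding fischer_keys
  by (rule sum.mono_neutral_left) (use assms in \<open>auto simp: in_keys_iff\<close>)

lemma fischer_alt2:
  assumes "finite S" "Poly_Mapping.keys Q \<subseteq> S"
  shows "fischer P Q = (\<Sum>a\<in>S. cnj (lk P a) * of_nat (mf a) * lk Q a)"
proof -
  have "fischer P Q = (\<Sum>a\<in>S \<union> Poly_Mapping.keys P. cnj (lk P a) * of_nat (mf a) * lk Q a)"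
    by (rule fischer_alt) (use assms in auto)
  also have "\<dots> = (\<Sum>a\<in>S. cnj (lk P a) * of_nat (mf a) * lk Q a)"
    by (rule sum.mono_neutral_right) (use assms in \<open>auto simp: in_keys_iff\<close>)
  finally show ?thesis .
qed

lemma fischer_cnj: "fischer Q P = cnj (fischer P Q)"
proof -
  let ?S = "Poly_Mapping.keys P \<union> Poly_Mapping.keys Q"
  show ?thesis
    by (simp add: fischer_alt[of ?S P] fischer_alt[of ?S Q] ac_simps)
qed

lemma fischer_add_left: "fischer (P + P') Q = fischer P Q + fischer P' Q"
proof -
  let ?S = "Poly_Mapping.keys P \<union> Poly_Mapping.keys P'"
  have "Poly_Mapping.keys (P + P') \<subseteq> ?S" by (rule keys_add)
  then show ?thesis
    by (simp add: fischer_alt[of ?S] lookup_add algebra_simps sum.distrib)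
qed

lemma fischer_add_right: "fischer P (Q + Q') = fischer P Q + fischer P Q'"
  by (metis fischer_cnj fischer_add_left complex_cnj_add)

lemma fischer_const_left: "fischer (const c * P) Q = cnj c * fischer P Q"
proof -
  let ?S = "Poly_Mapping.keys P"
  have "Poly_Mapping.keys (const c * P) \<subseteq> ?S" by (auto simp: in_keys_iff)
  then show ?thesis
    by (simp add: fischer_alt[of ?S] sum_distrib_left) (simp add: ac_simps)
qed

lemma fischer_const_right: "fischer P (const c * Q) = c * fischer P Q"
  by (metis fischer_cnj fischer_const_left complex_cnj_mult complex_cnj_cnj)

lemma fischer_zero_left [simp]: "fischer 0 Q = 0"
  by (simp add: fischer_keys)
lemma fischer_zero_right [simp]: "fischer P 0 = 0"
  by (simp add: fischer_keys)

lemma neg_const: "- P = const (-1) * P"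
  by (rule poly_mapping_eqI) simp
lemma fischer_uminus_left: "fischer (- P) Q = - fischer P Q"
  using fischer_const_left[of "-1" P Q] by (simp add: neg_const[symmetric])
lemma fischer_uminus_right: "fischer P (- Q) = - fischer P Q"
  using fischer_const_right[of P "-1" Q] by (simp add: neg_const[symmetric])
lemma fischer_diff_left: "fischer (P - P') Q = fischer P Q - fischer P' Q"
  using fischer_add_left[of P "-P'" Q] by (simp add: fischer_uminus_left)
lemma fischer_diff_right: "fischer P (Q - Q') = fischer P Q - fischer P Q'"
  using fischer_add_right[of P Q "-Q'"] by (simp add: fischer_uminus_right)

lemma fischer_sum_left: "fischer (sum F S) Q = (\<Sum>s\<in>S. fischer (F s) Q)"
  by (induction S rule: infinite_finite_induct) (auto simp: fischer_add_left)
lemma fischer_sum_right: "fischer P (sum F S) = (\<Sum>s\<in>S. fischer P (F s))"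
  by (induction S rule: infinite_finite_induct) (auto simp: fischer_add_right)

lemma fischer_self: "fischer P P = of_real (\<Sum>a\<in>Poly_Mapping.keys P. real (mf a) * (cmod (lk P a))\<^sup>2)"
proof -
  have key: "cnj z * of_nat n * z = of_real (real n * (cmod z)\<^sup>2)" for z :: complex and n
  proof -
    have "cnj z * of_nat n * z = of_nat n * (z * cnj z)" by (simp add: ac_simps)
    also have "\<dots> = of_real (real n * (cmod z)\<^sup>2)" by (simp add: complex_norm_square[symmetric])
    finally show ?thesis .
  qed
  show ?thesis unfolding fischer_keys of_real_sum
    by (rule sum.cong[OF refl]) (rule key)
qed

lemma fischer_self_eq0: "fischer P P = 0 \<Longrightarrow> P = 0"
proof -
  assume h: "fischer P P = 0"
  have "of_real (\<Sum>a\<in>Poly_Mapping.keys P. real (mf a) * (cmod (lk P a))\<^sup>2) = (0::complex)"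
    using h by (simp only: fischer_self)
  then have "(\<Sum>a\<in>Poly_Mapping.keys P. real (mf a) * (cmod (lk P a))\<^sup>2) = 0"
    by (simp only: of_real_eq_0_iff)
  then have A: "\<forall>a\<in>Poly_Mapping.keys P. real (mf a) * (cmod (lk P a))\<^sup>2 = 0"
    by (subst (asm) sum_nonneg_eq_0_iff) auto
  have "\<forall>a\<in>Poly_Mapping.keys P. lk P a = 0"
  proof
    fix a assume "a \<in> Poly_Mapping.keys P"
    then have "real (mf a) * (cmod (lk P a))\<^sup>2 = 0" using A by blast
    moreover have "real (mf a) \<noteq> 0" using mf_pos[of a] by simp
    ultimately show "lk P a = 0" by simp
  qed
  then show "P = 0" by (intro poly_mapping_eqI) (auto simp: in_keys_iff)
qed

lemma keys_var_mult: "Poly_Mapping.keys (var i * P) = (\<lambda>a. a + ee i) ` Poly_Mapping.keys P"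
proof
  show "Poly_Mapping.keys (var i * P) \<subseteq> (\<lambda>a. a + ee i) ` Poly_Mapping.keys P"
  proof
    fix b assume "b \<in> Poly_Mapping.keys (var i * P)"
    then have "0 < lk b i" "b - ee i \<in> Poly_Mapping.keys P"
      by (auto simp: in_keys_iff lookup_var_mult split: if_splits)
    then show "b \<in> (\<lambda>a. a + ee i) ` Poly_Mapping.keys P"
      by (intro image_eqI[of _ _ "b - ee i"]) (auto simp: ee_simps)
  qed
next
  show "(\<lambda>a. a + ee i) ` Poly_Mapping.keys P \<subseteq> Poly_Mapping.keys (var i * P)"
    by (auto simp: in_keys_iff lookup_var_mult ee_simps lookup_add)
qed

lemma fischer_var_left: "fischer (var i * P) Q = fischer P (pderiv i Q)"
proof -
  have inj: "inj_on (\<lambda>a. a + ee i) (Poly_Mapping.keys P)"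
    by (auto simp: inj_on_def)
  have "fischer (var i * P) Q = (\<Sum>b\<in>(\<lambda>a. a + ee i) ` Poly_Mapping.keys P.
          cnj (lk (var i * P) b) * of_nat (mf b) * lk Q b)"
    by (simp add: fischer_keys keys_var_mult)
  also have "\<dots> = (\<Sum>a\<in>Poly_Mapping.keys P. cnj (lk P a) * of_nat (mf (a + ee i)) * lk Q (a + ee i))"
    by (subst sum.reindex[OF inj]) (simp add: lookup_var_mult ee_simps lookup_add)
  also have "\<dots> = fischer P (pderiv i Q)"
    by (simp add: fischer_keys lookup_pderiv mf_add_ee mf_add_ee[unfolded One_nat_def]) (simp add: algebra_simps)
  finally show ?thesis .
qed

lemma fischer_var_right: "fischer P (var i * Q) = fischer (pderiv i P) Q"
  by (metis fischer_cnj fischer_var_left)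


definition Ex_op :: "nat \<Rightarrow> cpoly \<Rightarrow> cpoly" where "Ex_op m P = (\<Sum>j<m. var j * pderiv j P)"
definition Eu_op :: "nat \<Rightarrow> cpoly \<Rightarrow> cpoly" where "Eu_op m P = (\<Sum>j<m. var (m + j) * pderiv (m + j) P)"

lemma idx_ne1 [simp]: "(j::nat) < m \<Longrightarrow> j \<noteq> m + k" by arith
lemma idx_ne2 [simp]: "(j::nat) < m \<Longrightarrow> m + k \<noteq> j" by arith

lemma sum_delta_lt: "(\<Sum>j<(m::nat). if i = j then f j else 0) = (if i < m then f i else (0::'a::comm_monoid_add))"
  by (simp add: sum.delta')
lemma sum_delta_mlt: "(\<Sum>j<(m::nat). if i = m + j then f j else 0) = (if m \<le> i \<and> i < 2 * m then f (i - m) else (0::'a::comm_monoid_add))"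
proof (cases "m \<le> i \<and> i < 2 * m")
  case True
  then have "(\<Sum>j<m. (if i = m + j then f j else 0)) = (\<Sum>j<m. (if j = i - m then f (i - m) else 0))"
    by (intro sum.cong) auto
  moreover have "i - m < m" using True by arith
  ultimately show ?thesis using True by simp
next
  case False
  have "(\<Sum>j<m. if i = m + j then f j else 0) = 0" by (rule sum.neutral) (use False in auto)
  then show ?thesis using False by (simp only: if_False)
qed

lemma normx_eq: "normx m = (\<Sum>j<m. var j * var j)"
  by (simp add: normx_def X_def power2_eq_square)
lemma normu_eq: "normu m = (\<Sum>j<m. var (m + j) * var (m + j))"
  by (simp add: normu_def U_def power2_eq_square)
lemma ux_eq: "ux m = (\<Sum>j<m. var (m + j) * var j)"
  by (simp add: ux_def U_def X_def)

lemma pd_vv: "pderiv i (var a * (var b * P)) = (if i = a then var b * P else 0) + (if i = b then var a * P else 0)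
   + var a * (var b * pderiv i P)"
  by (simp add: pderiv_var_mult distrib_left)

lemma pd_N: "pderiv i (normx m * P) = (if i < m then 2 * (var i * P) else 0) + normx m * pderiv i P"
proof -
  have "normx m * P = (\<Sum>j<m. var j * (var j * P))" by (simp add: normx_eq sum_distrib_right mult.assoc)
  then have "pderiv i (normx m * P) = (\<Sum>j<m. (if i = j then var j * P else 0) + (if i = j then var j * P else 0)
   + var j * (var j * pderiv i P))" by (simp add: pd_vv)
  also have "\<dots> = (if i < m then var i * P else 0) + (if i < m then var i * P else 0) + normx m * pderiv i P"
    unfolding sum.distrib sum_delta_lt by (simp add: normx_eq sum_distrib_right mult.assoc)
  finally show ?thesis unfolding mult_2 by simp
qed

lemma pd_M: "pderiv i (normu m * P) = (if m \<le> i \<and> i < 2 * m then 2 * (var i * P) else 0) + normu m * pderiv i P"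
proof -
  have "normu m * P = (\<Sum>j<m. var (m + j) * (var (m + j) * P))" by (simp add: normu_eq sum_distrib_right mult.assoc)
  then have "pderiv i (normu m * P) = (\<Sum>j<m. (if i = m + j then var (m + j) * P else 0) + (if i = m + j then var (m + j) * P else 0)
   + var (m + j) * (var (m + j) * pderiv i P))" by (simp add: pd_vv)
  also have "\<dots> = (if m \<le> i \<and> i < 2 * m then var (m + (i - m)) * P else 0) + (if m \<le> i \<and> i < 2 * m then var (m + (i - m)) * P else 0) + normu m * pderiv i P"
    unfolding sum.distrib sum_delta_mlt by (simp add: normu_eq sum_distrib_right mult.assoc)
  finally show ?thesis unfolding mult_2 by simp
qed

lemma pd_Q: "pderiv i (ux m * P) = (if i < m then var (m + i) * P else 0)
   + (if m \<le> i \<and> i < 2 * m then var (i - m) * P else 0) + ux m * pderiv i P"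
proof -
  have "ux m * P = (\<Sum>j<m. var (m + j) * (var j * P))" by (simp add: ux_eq sum_distrib_right mult.assoc)
  then have "pderiv i (ux m * P) = (\<Sum>j<m. (if i = m + j then var j * P else 0) + (if i = j then var (m + j) * P else 0)
   + var (m + j) * (var j * pderiv i P))" by (simp add: pd_vv)
  also have "\<dots> = (if m \<le> i \<and> i < 2 * m then var (i - m) * P else 0) + (if i < m then var (m + i) * P else 0) + ux m * pderiv i P"
    unfolding sum.distrib sum_delta_lt sum_delta_mlt by (simp add: ux_eq sum_distrib_right mult.assoc)
  finally show ?thesis by (simp add: ac_simps)
qed

lemma pd_lt: "i < m \<Longrightarrow> pderiv i (normx m * P) = 2 * (var i * P) + normx m * pderiv i P"
  by (simp add: pd_N)
lemma pd_lt_M: "i < m \<Longrightarrow> pderiv i (normu m * P) = normu m * pderiv i P"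
  by (simp add: pd_M)
lemma pd_lt_Q: "i < m \<Longrightarrow> pderiv i (ux m * P) = var (m + i) * P + ux m * pderiv i P"
  by (simp add: pd_Q)
lemma pd_ge: "i < m \<Longrightarrow> pderiv (m + i) (normx m * P) = normx m * pderiv (m + i) P"
  by (simp add: pd_N)
lemma pd_ge_M: "i < m \<Longrightarrow> pderiv (m + i) (normu m * P) = 2 * (var (m + i) * P) + normu m * pderiv (m + i) P"
  by (simp add: pd_M)
lemma pd_ge_Q: "i < m \<Longrightarrow> pderiv (m + i) (ux m * P) = var i * P + ux m * pderiv (m + i) P"
  by (simp add: pd_Q)

lemma pd_var_same: "pderiv i (var i * P) = P + var i * pderiv i P"
  by (simp add: pderiv_var_mult)
lemma pd_var_lt_ge: "i < m \<Longrightarrow> pderiv i (var (m + j) * P) = var (m + j) * pderiv i P"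
  by (simp add: pderiv_var_mult)
lemma pd_var_ge_lt: "j < m \<Longrightarrow> pderiv (m + i) (var j * P) = var j * pderiv (m + i) P"
  by (simp add: pderiv_var_mult)

lemmas pd_rules = pd_lt pd_lt_M pd_lt_Q pd_ge pd_ge_M pd_ge_Q

lemma sum_lt_const: "(\<Sum>j<(m::nat). (P::cpoly)) = of_nat m * P"
  by simp

lemma lapx_N: "lap_x m (normx m * P) = 2 * of_nat m * P + 4 * Ex_op m P + normx m * lap_x m P"
proof -
  have "lap_x m (normx m * P) = (\<Sum>j<m. 2 * P + 4 * (var j * pderiv j P) + normx m * pderiv j (pderiv j P))"
    unfolding lap_x_def by (rule sum.cong[OF refl]) (simp add: pd_rules pd_var_same; simp add: algebra_simps)
  also have "\<dots> = 2 * of_nat m * P + 4 * Ex_op m P + normx m * lap_x m P"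
    by (simp add: sum.distrib Ex_op_def lap_x_def sum_distrib_left)
  finally show ?thesis .
qed

lemma lapx_M: "lap_x m (normu m * P) = normu m * lap_x m P"
  unfolding lap_x_def sum_distrib_left by (rule sum.cong[OF refl]) (simp add: pd_rules)
lemma lapu_N: "lap_u m (normx m * P) = normx m * lap_u m P"
  unfolding lap_u_def sum_distrib_left by (rule sum.cong[OF refl]) (simp add: pd_rules)

lemma lapu_M: "lap_u m (normu m * P) = 2 * of_nat m * P + 4 * Eu_op m P + normu m * lap_u m P"
proof -
  have "lap_u m (normu m * P) = (\<Sum>j<m. 2 * P + 4 * (var (m + j) * pderiv (m + j) P) + normu m * pderiv (m + j) (pderiv (m + j) P))"
    unfolding lap_u_def by (rule sum.cong[OF refl]) (simp add: pd_rules pd_var_same; simp add: algebra_simps)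
  also have "\<dots> = 2 * of_nat m * P + 4 * Eu_op m P + normu m * lap_u m P"
    by (simp add: sum.distrib Eu_op_def lap_u_def sum_distrib_left)
  finally show ?thesis .
qed

lemma lapx_Q: "lap_x m (ux m * P) = 2 * u_dx m P + ux m * lap_x m P"
proof -
  have "lap_x m (ux m * P) = (\<Sum>j<m. 2 * (var (m + j) * pderiv j P) + ux m * pderiv j (pderiv j P))"
    unfolding lap_x_def by (rule sum.cong[OF refl]) (simp add: pd_rules pd_var_lt_ge; simp add: algebra_simps)
  also have "\<dots> = 2 * u_dx m P + ux m * lap_x m P"
    by (simp add: sum.distrib u_dx_def U_def lap_x_def sum_distrib_left)
  finally show ?thesis .
qed

lemma lapu_Q: "lap_u m (ux m * P) = 2 * x_du m P + ux m * lap_u m P"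
proof -
  have "lap_u m (ux m * P) = (\<Sum>j<m. 2 * (var j * pderiv (m + j) P) + ux m * pderiv (m + j) (pderiv (m + j) P))"
    unfolding lap_u_def by (rule sum.cong[OF refl]) (simp add: pd_rules pd_var_ge_lt; simp add: algebra_simps)
  also have "\<dots> = 2 * x_du m P + ux m * lap_u m P"
    by (simp add: sum.distrib x_du_def X_def lap_u_def sum_distrib_left)
  finally show ?thesis .
qed

lemma D_N: "du_dx m (normx m * P) = normx m * du_dx m P + 2 * x_du m P"
proof -
  have "du_dx m (normx m * P) = (\<Sum>j<m. normx m * pderiv (m + j) (pderiv j P) + 2 * (var j * pderiv (m + j) P))"
    unfolding du_dx_def by (rule sum.cong[OF refl]) (simp add: pd_rules pd_var_ge_lt; simp add: algebra_simps)
  also have "\<dots> = normx m * du_dx m P + 2 * x_du m P"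
    by (simp add: sum.distrib x_du_def X_def du_dx_def sum_distrib_left)
  finally show ?thesis .
qed

lemma D_M: "du_dx m (normu m * P) = normu m * du_dx m P + 2 * u_dx m P"
proof -
  have "du_dx m (normu m * P) = (\<Sum>j<m. normu m * pderiv (m + j) (pderiv j P) + 2 * (var (m + j) * pderiv j P))"
    unfolding du_dx_def by (rule sum.cong[OF refl]) (simp add: pd_rules; simp add: algebra_simps)
  also have "\<dots> = normu m * du_dx m P + 2 * u_dx m P"
    by (simp add: sum.distrib u_dx_def U_def du_dx_def sum_distrib_left)
  finally show ?thesis .
qed

lemma D_Q: "du_dx m (ux m * P) = of_nat m * P + Ex_op m P + Eu_op m P + ux m * du_dx m P"
proof -
  have "du_dx m (ux m * P) = (\<Sum>j<m. P + var (m + j) * pderiv (m + j) P + var j * pderiv j P + ux m * pderiv (m + j) (pderiv j P))"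
    unfolding du_dx_def by (rule sum.cong[OF refl]) (simp add: pd_rules pd_var_same pd_var_ge_lt; simp add: algebra_simps)
  also have "\<dots> = of_nat m * P + Ex_op m P + Eu_op m P + ux m * du_dx m P"
    by (simp add: sum.distrib Ex_op_def Eu_op_def du_dx_def sum_distrib_left)
  finally show ?thesis .
qed

lemma X_N: "x_du m (normx m * P) = normx m * x_du m P"
  unfolding x_du_def X_def sum_distrib_left by (rule sum.cong[OF refl]) (simp add: pd_rules; simp add: algebra_simps)
lemma X_M: "x_du m (normu m * P) = 2 * (ux m * P) + normu m * x_du m P"
proof -
  have "x_du m (normu m * P) = (\<Sum>j<m. 2 * (var (m + j) * var j * P) + normu m * (var j * pderiv (m + j) P))"
    unfolding x_du_def X_def by (rule sum.cong[OF refl]) (simp add: pd_rules; simp add: algebra_simps)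
  also have "\<dots> = 2 * (ux m * P) + normu m * x_du m P"
    by (simp add: sum.distrib x_du_def X_def ux_eq sum_distrib_left sum_distrib_right)
  finally show ?thesis .
qed
lemma X_Q: "x_du m (ux m * P) = normx m * P + ux m * x_du m P"
proof -
  have "x_du m (ux m * P) = (\<Sum>j<m. var j * var j * P + ux m * (var j * pderiv (m + j) P))"
    unfolding x_du_def X_def by (rule sum.cong[OF refl]) (simp add: pd_rules; simp add: algebra_simps)
  also have "\<dots> = normx m * P + ux m * x_du m P"
    by (simp add: sum.distrib x_du_def X_def normx_eq sum_distrib_left sum_distrib_right)
  finally show ?thesis .
qed
lemma Y_N: "u_dx m (normx m * P) = 2 * (ux m * P) + normx m * u_dx m P"
proof -
  have "u_dx m (normx m * P) = (\<Sum>j<m. 2 * (var (m + j) * var j * P) + normx m * (var (m + j) * pderiv j P))"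
    unfolding u_dx_def U_def by (rule sum.cong[OF refl]) (simp add: pd_rules; simp add: algebra_simps)
  also have "\<dots> = 2 * (ux m * P) + normx m * u_dx m P"
    by (simp add: sum.distrib u_dx_def U_def ux_eq sum_distrib_left sum_distrib_right)
  finally show ?thesis .
qed
lemma Y_M: "u_dx m (normu m * P) = normu m * u_dx m P"
  unfolding u_dx_def U_def sum_distrib_left by (rule sum.cong[OF refl]) (simp add: pd_rules; simp add: algebra_simps)
lemma Y_Q: "u_dx m (ux m * P) = normu m * P + ux m * u_dx m P"
proof -
  have "u_dx m (ux m * P) = (\<Sum>j<m. var (m + j) * var (m + j) * P + ux m * (var (m + j) * pderiv j P))"
    unfolding u_dx_def U_def by (rule sum.cong[OF refl]) (simp add: pd_rules; simp add: algebra_simps)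
  also have "\<dots> = normu m * P + ux m * u_dx m P"
    by (simp add: sum.distrib u_dx_def U_def normu_eq sum_distrib_left sum_distrib_right)
  finally show ?thesis .
qed

lemma pderiv_comm3: "pderiv a (pderiv b (pderiv c P)) = pderiv c (pderiv a (pderiv b P))"
  by (metis pderiv_comm)

lemma sum_delta2: "(\<Sum>j<(m::nat). \<Sum>k<m. if j = k then f j k else 0) = (\<Sum>j<m. f j j)"
  by (rule sum.cong[OF refl]) (simp add: sum.delta)

lemma lapx_Y: "lap_x m (u_dx m P) = u_dx m (lap_x m P)"
proof -
  have "lap_x m (u_dx m P) = (\<Sum>j<m. \<Sum>k<m. var (m + k) * pderiv k (pderiv j (pderiv j P)))"
    unfolding lap_x_def u_dx_def U_def pderiv_sum
    by (intro sum.cong refl) (simp add: pd_var_lt_ge pderiv_comm3)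
  also have "\<dots> = u_dx m (lap_x m P)"
    unfolding u_dx_def U_def lap_x_def pderiv_sum sum_distrib_left by (rule sum.swap)
  finally show ?thesis .
qed

lemma lapu_X: "lap_u m (x_du m P) = x_du m (lap_u m P)"
proof -
  have "lap_u m (x_du m P) = (\<Sum>j<m. \<Sum>k<m. var k * pderiv (m + k) (pderiv (m + j) (pderiv (m + j) P)))"
    unfolding lap_u_def x_du_def X_def pderiv_sum
    by (intro sum.cong refl) (simp add: pd_var_ge_lt pderiv_comm3)
  also have "\<dots> = x_du m (lap_u m P)"
    unfolding x_du_def X_def lap_u_def pderiv_sum sum_distrib_left by (rule sum.swap)
  finally show ?thesis .
qed

lemma lapu_Y: "lap_u m (u_dx m P) = u_dx m (lap_u m P) + 2 * du_dx m P"
proof -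
  have "lap_u m (u_dx m P) = (\<Sum>j<m. \<Sum>k<m. (if j = k then pderiv (m + j) (pderiv k P) + pderiv (m + j) (pderiv k P) else 0)
      + var (m + k) * pderiv k (pderiv (m + j) (pderiv (m + j) P)))"
    unfolding lap_u_def u_dx_def U_def pderiv_sum
    by (intro sum.cong refl) (simp add: pderiv_var_mult pderiv_comm3)
  also have "\<dots> = (\<Sum>j<m. \<Sum>k<m. (if j = k then pderiv (m + j) (pderiv k P) + pderiv (m + j) (pderiv k P) else 0))
      + (\<Sum>j<m. \<Sum>k<m. var (m + k) * pderiv k (pderiv (m + j) (pderiv (m + j) P)))"
    by (simp only: sum.distrib)
  also have "(\<Sum>j<m. \<Sum>k<m. (if j = k then pderiv (m + j) (pderiv k P) + pderiv (m + j) (pderiv k P) else 0)) = 2 * du_dx m P"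
    unfolding mult_2 by (simp only: sum_delta2 du_dx_def sum.distrib)
  also have "(\<Sum>j<m. \<Sum>k<m. var (m + k) * pderiv k (pderiv (m + j) (pderiv (m + j) P))) = u_dx m (lap_u m P)"
    unfolding u_dx_def U_def lap_u_def pderiv_sum sum_distrib_left by (rule sum.swap)
  finally show ?thesis by (simp add: add.commute)
qed

lemma lapx_X: "lap_x m (x_du m P) = x_du m (lap_x m P) + 2 * du_dx m P"
proof -
  have "lap_x m (x_du m P) = (\<Sum>j<m. \<Sum>k<m. (if j = k then pderiv (m + j) (pderiv k P) + pderiv (m + j) (pderiv k P) else 0)
      + var k * pderiv (m + k) (pderiv j (pderiv j P)))"
    unfolding lap_x_def x_du_def X_def pderiv_sum
    by (intro sum.cong refl) (auto simp add: pderiv_var_mult pderiv_comm3 intro: pderiv_comm)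
  also have "\<dots> = (\<Sum>j<m. \<Sum>k<m. (if j = k then pderiv (m + j) (pderiv k P) + pderiv (m + j) (pderiv k P) else 0))
      + (\<Sum>j<m. \<Sum>k<m. var k * pderiv (m + k) (pderiv j (pderiv j P)))"
    by (simp only: sum.distrib)
  also have "(\<Sum>j<m. \<Sum>k<m. (if j = k then pderiv (m + j) (pderiv k P) + pderiv (m + j) (pderiv k P) else 0)) = 2 * du_dx m P"
    unfolding mult_2 by (simp only: sum_delta2 du_dx_def sum.distrib)
  also have "(\<Sum>j<m. \<Sum>k<m. var k * pderiv (m + k) (pderiv j (pderiv j P))) = x_du m (lap_x m P)"
    unfolding x_du_def X_def lap_x_def pderiv_sum sum_distrib_left by (rule sum.swap)
  finally show ?thesis by (simp add: add.commute)
qed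

lemma D_Y: "du_dx m (u_dx m P) = u_dx m (du_dx m P) + lap_x m P"
proof -
  have "du_dx m (u_dx m P) = (\<Sum>j<m. \<Sum>k<m. (if j = k then pderiv j (pderiv k P) else 0)
      + var (m + k) * pderiv k (pderiv (m + j) (pderiv j P)))"
    unfolding du_dx_def u_dx_def U_def pderiv_sum
    by (intro sum.cong refl) (auto simp add: pderiv_var_mult pderiv_comm3 intro: pderiv_comm)
  also have "\<dots> = (\<Sum>j<m. \<Sum>k<m. (if j = k then pderiv j (pderiv k P) else 0))
      + (\<Sum>j<m. \<Sum>k<m. var (m + k) * pderiv k (pderiv (m + j) (pderiv j P)))"
    by (simp only: sum.distrib)
  also have "(\<Sum>j<m. \<Sum>k<m. (if j = k then pderiv j (pderiv k P) else 0)) = lap_x m P"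
    by (simp only: sum_delta2) (simp add: lap_x_def)
  also have "(\<Sum>j<m. \<Sum>k<m. var (m + k) * pderiv k (pderiv (m + j) (pderiv j P))) = u_dx m (du_dx m P)"
    unfolding u_dx_def U_def du_dx_def pderiv_sum sum_distrib_left by (rule sum.swap)
  finally show ?thesis by (simp add: add.commute)
qed

lemma D_X: "du_dx m (x_du m P) = x_du m (du_dx m P) + lap_u m P"
proof -
  have "du_dx m (x_du m P) = (\<Sum>j<m. \<Sum>k<m. (if j = k then pderiv (m + j) (pderiv (m + k) P) else 0)
      + var k * pderiv (m + k) (pderiv (m + j) (pderiv j P)))"
    unfolding du_dx_def x_du_def X_def pderiv_sum
    apply (intro sum.cong refl)
    subgoal for j k
      using pderiv_comm3[of "m + j" j "m + k" P] pderiv_comm[of "m + j" "m + k"]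
      by (auto simp add: pderiv_var_mult)
    done
  also have "\<dots> = (\<Sum>j<m. \<Sum>k<m. (if j = k then pderiv (m + j) (pderiv (m + k) P) else 0))
      + (\<Sum>j<m. \<Sum>k<m. var k * pderiv (m + k) (pderiv (m + j) (pderiv j P)))"
    by (simp only: sum.distrib)
  also have "(\<Sum>j<m. \<Sum>k<m. (if j = k then pderiv (m + j) (pderiv (m + k) P) else 0)) = lap_u m P"
    by (simp only: sum_delta2) (simp add: lap_u_def)
  also have "(\<Sum>j<m. \<Sum>k<m. var k * pderiv (m + k) (pderiv (m + j) (pderiv j P))) = x_du m (du_dx m P)"
    unfolding x_du_def X_def du_dx_def pderiv_sum sum_distrib_left by (rule sum.swap)
  finally show ?thesis by (simp add: add.commute)
qed

lemma D_lapx: "du_dx m (lap_x m P) = lap_x m (du_dx m P)"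
  unfolding du_dx_def lap_x_def pderiv_sum
  by (subst sum.swap) (intro sum.cong refl; metis pderiv_comm)
lemma D_lapu: "du_dx m (lap_u m P) = lap_u m (du_dx m P)"
  unfolding du_dx_def lap_u_def pderiv_sum
  by (subst sum.swap) (intro sum.cong refl; metis pderiv_comm)

lemma XY_comm: "x_du m (u_dx m P) = u_dx m (x_du m P) + Ex_op m P - Eu_op m P"
proof -
  have "x_du m (u_dx m P) = (\<Sum>j<m. \<Sum>k<m. (if j = k then var j * pderiv k P else 0)
      + var j * (var (m + k) * pderiv (m + j) (pderiv k P)))"
    unfolding x_du_def u_dx_def X_def U_def pderiv_sum sum_distrib_left
    by (intro sum.cong refl) (simp add: pderiv_var_mult distrib_left)
  also have "\<dots> = Ex_op m P + (\<Sum>j<m. \<Sum>k<m. var j * (var (m + k) * pderiv (m + j) (pderiv k P)))"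
    by (simp only: sum.distrib sum_delta2) (simp add: Ex_op_def)
  finally have 1: "x_du m (u_dx m P) = Ex_op m P + (\<Sum>j<m. \<Sum>k<m. var j * (var (m + k) * pderiv (m + j) (pderiv k P)))" .
  have "u_dx m (x_du m P) = (\<Sum>k<m. \<Sum>j<m. (if j = k then var (m + j) * pderiv (m + j) P else 0)
      + var (m + k) * (var j * pderiv k (pderiv (m + j) P)))"
    unfolding x_du_def u_dx_def X_def U_def pderiv_sum sum_distrib_left
    by (intro sum.cong refl) (auto simp add: pderiv_var_mult distrib_left)
  also have "\<dots> = (\<Sum>k<m. \<Sum>j<m. (if j = k then var (m + j) * pderiv (m + j) P else 0))
      + (\<Sum>k<m. \<Sum>j<m. var (m + k) * (var j * pderiv k (pderiv (m + j) P)))"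
    by (simp only: sum.distrib)
  also have "(\<Sum>k<m. \<Sum>j<m. (if j = k then var (m + j) * pderiv (m + j) P else 0)) = Eu_op m P"
    by (simp add: Eu_op_def sum.delta')
  also have "(\<Sum>k<m. \<Sum>j<m. var (m + k) * (var j * pderiv k (pderiv (m + j) P)))
      = (\<Sum>j<m. \<Sum>k<m. var j * (var (m + k) * pderiv (m + j) (pderiv k P)))"
    apply (subst sum.swap)
    apply (intro sum.cong refl)
    subgoal for j k using pderiv_comm[of k "m + j" P] by (simp add: mult.left_commute)
    done
  finally have 2: "u_dx m (x_du m P) = Eu_op m P + (\<Sum>j<m. \<Sum>k<m. var j * (var (m + k) * pderiv (m + j) (pderiv k P)))" .
  show ?thesis using 1 2 by (simp add: algebra_simps)
qed


lemma lapx_add [simp]: "lap_x m (P + Q) = lap_x m P + lap_x m Q"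
  by (simp add: lap_x_def sum.distrib)
lemma lapu_add [simp]: "lap_u m (P + Q) = lap_u m P + lap_u m Q"
  by (simp add: lap_u_def sum.distrib)
lemma D_add [simp]: "du_dx m (P + Q) = du_dx m P + du_dx m Q"
  by (simp add: du_dx_def sum.distrib)
lemma X_add [simp]: "x_du m (P + Q) = x_du m P + x_du m Q"
  by (simp add: x_du_def sum.distrib distrib_left)
lemma Y_add [simp]: "u_dx m (P + Q) = u_dx m P + u_dx m Q"
  by (simp add: u_dx_def sum.distrib distrib_left)
lemma Ex_add [simp]: "Ex_op m (P + Q) = Ex_op m P + Ex_op m Q"
  by (simp add: Ex_op_def sum.distrib distrib_left)
lemma Eu_add [simp]: "Eu_op m (P + Q) = Eu_op m P + Eu_op m Q"
  by (simp add: Eu_op_def sum.distrib distrib_left)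

lemma lapx_diff [simp]: "lap_x m (P - Q) = lap_x m P - lap_x m Q"
  by (simp add: lap_x_def sum_subtractf)
lemma lapu_diff [simp]: "lap_u m (P - Q) = lap_u m P - lap_u m Q"
  by (simp add: lap_u_def sum_subtractf)
lemma D_diff [simp]: "du_dx m (P - Q) = du_dx m P - du_dx m Q"
  by (simp add: du_dx_def sum_subtractf)
lemma X_diff [simp]: "x_du m (P - Q) = x_du m P - x_du m Q"
  by (simp add: x_du_def sum_subtractf right_diff_distrib)
lemma Y_diff [simp]: "u_dx m (P - Q) = u_dx m P - u_dx m Q"
  by (simp add: u_dx_def sum_subtractf right_diff_distrib)

lemma lapx_const [simp]: "lap_x m (const c * P) = const c * lap_x m P"
  by (simp add: lap_x_def sum_distrib_left)
lemma lapu_const [simp]: "lap_u m (const c * P) = const c * lap_u m P"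
  by (simp add: lap_u_def sum_distrib_left)
lemma D_const [simp]: "du_dx m (const c * P) = const c * du_dx m P"
  by (simp add: du_dx_def sum_distrib_left)
lemma X_const [simp]: "x_du m (const c * P) = const c * x_du m P"
  by (simp add: x_du_def sum_distrib_left mult.left_commute)
lemma Y_const [simp]: "u_dx m (const c * P) = const c * u_dx m P"
  by (simp add: u_dx_def sum_distrib_left mult.left_commute)
lemma Ex_const [simp]: "Ex_op m (const c * P) = const c * Ex_op m P"
  by (simp add: Ex_op_def sum_distrib_left mult.left_commute)
lemma Eu_const [simp]: "Eu_op m (const c * P) = const c * Eu_op m P"
  by (simp add: Eu_op_def sum_distrib_left mult.left_commute)

lemma zero_const: "(0::cpoly) = const 0 * 0" by simp
lemma lapx_zero [simp]: "lap_x m 0 = 0" by (simp add: lap_x_def)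
lemma lapu_zero [simp]: "lap_u m 0 = 0" by (simp add: lap_u_def)
lemma D_zero [simp]: "du_dx m 0 = 0" by (simp add: du_dx_def)
lemma X_zero [simp]: "x_du m 0 = 0" by (simp add: x_du_def)
lemma Y_zero [simp]: "u_dx m 0 = 0" by (simp add: u_dx_def)

lemma lapx_num [simp]: "lap_x m (numeral n * P) = numeral n * lap_x m P"
  by (simp add: numeral_const)
lemma lapu_num [simp]: "lap_u m (numeral n * P) = numeral n * lap_u m P"
  by (simp add: numeral_const)
lemma D_num [simp]: "du_dx m (numeral n * P) = numeral n * du_dx m P"
  by (simp add: numeral_const)
lemma X_num [simp]: "x_du m (numeral n * P) = numeral n * x_du m P"
  by (simp add: numeral_const)
lemma Y_num [simp]: "u_dx m (numeral n * P) = numeral n * u_dx m P"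
  by (simp add: numeral_const)

section \<open>Bidegree spaces\<close>

lemma Pspace_iff: "P \<in> Pspace m p q \<longleftrightarrow> (\<forall>a. lk P a \<noteq> 0 \<longrightarrow> Poly_Mapping.keys a \<subseteq> {..<2*m}
      \<and> (\<Sum>j<m. lk a j) = p \<and> (\<Sum>j<m. lk a (m + j)) = q)"
  by (auto simp: Pspace_def in_keys_iff)

lemma Pspace_zero [simp]: "0 \<in> Pspace m p q"
  by (simp add: Pspace_def)
lemma Pspace_add: "P \<in> Pspace m p q \<Longrightarrow> Q \<in> Pspace m p q \<Longrightarrow> P + Q \<in> Pspace m p q"
  unfolding Pspace_def using keys_add[of P Q] by blast
lemma Pspace_uminus: "P \<in> Pspace m p q \<Longrightarrow> - P \<in> Pspace m p q"
  unfolding Pspace_def by simp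
lemma Pspace_diff: "P \<in> Pspace m p q \<Longrightarrow> Q \<in> Pspace m p q \<Longrightarrow> P - Q \<in> Pspace m p q"
  using Pspace_add[of P m p q "-Q"] Pspace_uminus[of Q] by simp
lemma Pspace_const: "P \<in> Pspace m p q \<Longrightarrow> const c * P \<in> Pspace m p q"
proof -
  have "Poly_Mapping.keys (const c * P) \<subseteq> Poly_Mapping.keys P" by (auto simp: in_keys_iff)
  then show "P \<in> Pspace m p q \<Longrightarrow> const c * P \<in> Pspace m p q" unfolding Pspace_def by blast
qed
lemma Pspace_num: "P \<in> Pspace m p q \<Longrightarrow> numeral n * P \<in> Pspace m p q"
  by (simp add: numeral_const Pspace_const)
lemma Pspace_sum: "(\<And>s. s \<in> S \<Longrightarrow> F s \<in> Pspace m p q) \<Longrightarrow> sum F S \<in> Pspace m p q"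
  by (induction S rule: infinite_finite_induct) (auto intro: Pspace_add)

lemma Pspace_mult:
  assumes "A \<in> Pspace m p q" "B \<in> Pspace m p' q'"
  shows "A * B \<in> Pspace m (p + p') (q + q')"
  unfolding Pspace_def
proof
  show "\<forall>a\<in>Poly_Mapping.keys (A * B). Poly_Mapping.keys a \<subseteq> {..<2*m}
      \<and> (\<Sum>j<m. lk a j) = p + p' \<and> (\<Sum>j<m. lk a (m + j)) = q + q'"
  proof
    fix a assume "a \<in> Poly_Mapping.keys (A * B)"
    then obtain a1 a2 where a: "a = a1 + a2" "a1 \<in> Poly_Mapping.keys A" "a2 \<in> Poly_Mapping.keys B"
      using keys_mult[of A B] by blast
    have "Poly_Mapping.keys a \<subseteq> Poly_Mapping.keys a1 \<union> Poly_Mapping.keys a2"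
      unfolding a by (rule keys_add)
    then show "Poly_Mapping.keys a \<subseteq> {..<2*m}
      \<and> (\<Sum>j<m. lk a j) = p + p' \<and> (\<Sum>j<m. lk a (m + j)) = q + q'"
      using assms a by (auto simp: Pspace_def lookup_add sum.distrib)
  qed
qed

lemma var_Pspace_x: "j < m \<Longrightarrow> var j \<in> Pspace m 1 0"
  by (auto simp: Pspace_def var_def lookup_single when_def sum.delta)
lemma var_Pspace_u: "j < m \<Longrightarrow> var (m + j) \<in> Pspace m 0 1"
  by (auto simp: Pspace_def var_def lookup_single when_def sum.delta)

lemma normx_Pspace: "normx m \<in> Pspace m 2 0"
  unfolding normx_eq
proof (rule Pspace_sum)
  fix s assume "s \<in> {..<m}"
  then have "var s * var s \<in> Pspace m (1 + 1) (0 + 0)"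
    by (intro Pspace_mult var_Pspace_x) auto
  then show "var s * var s \<in> Pspace m 2 0" by (simp add: numeral_2_eq_2)
qed
lemma normu_Pspace: "normu m \<in> Pspace m 0 2"
  unfolding normu_eq
proof (rule Pspace_sum)
  fix s assume "s \<in> {..<m}"
  then have "var (m + s) * var (m + s) \<in> Pspace m (0 + 0) (1 + 1)"
    by (intro Pspace_mult var_Pspace_u) auto
  then show "var (m + s) * var (m + s) \<in> Pspace m 0 2" by (simp add: numeral_2_eq_2)
qed
lemma ux_Pspace: "ux m \<in> Pspace m 1 1"
  unfolding ux_eq
proof (rule Pspace_sum)
  fix s assume "s \<in> {..<m}"
  then have "var (m + s) * var s \<in> Pspace m (0 + 1) (1 + 0)"
    by (intro Pspace_mult var_Pspace_u var_Pspace_x) auto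
  then show "var (m + s) * var s \<in> Pspace m 1 1" by simp
qed

lemma pderiv_x_Pspace:
  assumes "P \<in> Pspace m p q" "j < m"
  shows "pderiv j P \<in> Pspace m (p - 1) q" "p = 0 \<Longrightarrow> pderiv j P = 0"
proof -
  have key: "lk (pderiv j P) a \<noteq> 0 \<Longrightarrow> Poly_Mapping.keys a \<subseteq> {..<2*m}
      \<and> (\<Sum>i<m. lk a i) + 1 = p \<and> (\<Sum>i<m. lk a (m + i)) = q" for a
  proof -
    assume "lk (pderiv j P) a \<noteq> 0"
    then have h: "lk P (a + ee j) \<noteq> 0" by (simp add: lookup_pderiv)
    then have h2: "Poly_Mapping.keys (a + ee j) \<subseteq> {..<2*m}" "(\<Sum>i<m. lk (a + ee j) i) = p"
      "(\<Sum>i<m. lk (a + ee j) (m + i)) = q"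
      using assms(1) by (auto simp: Pspace_iff)
    have "Poly_Mapping.keys a \<subseteq> Poly_Mapping.keys (a + ee j)"
      by (auto simp: in_keys_iff lookup_add)
    moreover have "(\<Sum>i<m. lk (a + ee j) i) = (\<Sum>i<m. lk a i) + 1"
      using assms(2) by (simp add: lookup_add lookup_single when_def sum.distrib sum.delta)
    moreover have "(\<Sum>i<m. lk (a + ee j) (m + i)) = (\<Sum>i<m. lk a (m + i))"
      using assms(2) by (intro sum.cong) (auto simp: lookup_add lookup_single when_def)
    ultimately show ?thesis using h2 by auto
  qed
  show "pderiv j P \<in> Pspace m (p - 1) q"
    unfolding Pspace_iff using key by fastforce
  show "p = 0 \<Longrightarrow> pderiv j P = 0"
    using key by (intro poly_mapping_eqI) fastforce
qed

lemma pderiv_u_Pspace: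
  assumes "P \<in> Pspace m p q" "j < m"
  shows "pderiv (m + j) P \<in> Pspace m p (q - 1)" "q = 0 \<Longrightarrow> pderiv (m + j) P = 0"
proof -
  have key: "lk (pderiv (m + j) P) a \<noteq> 0 \<Longrightarrow> Poly_Mapping.keys a \<subseteq> {..<2*m}
      \<and> (\<Sum>i<m. lk a i) = p \<and> (\<Sum>i<m. lk a (m + i)) + 1 = q" for a
  proof -
    assume "lk (pderiv (m + j) P) a \<noteq> 0"
    then have h: "lk P (a + ee (m + j)) \<noteq> 0" by (simp add: lookup_pderiv)
    then have h2: "Poly_Mapping.keys (a + ee (m + j)) \<subseteq> {..<2*m}" "(\<Sum>i<m. lk (a + ee (m + j)) i) = p"
      "(\<Sum>i<m. lk (a + ee (m + j)) (m + i)) = q"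
      using assms(1) by (auto simp: Pspace_iff)
    have "Poly_Mapping.keys a \<subseteq> Poly_Mapping.keys (a + ee (m + j))"
      by (auto simp: in_keys_iff lookup_add)
    moreover have "(\<Sum>i<m. lk (a + ee (m + j)) (m + i)) = (\<Sum>i<m. lk a (m + i)) + 1"
      using assms(2) by (simp add: lookup_add lookup_single when_def sum.distrib sum.delta)
    moreover have "(\<Sum>i<m. lk (a + ee (m + j)) i) = (\<Sum>i<m. lk a i)"
      using assms(2) by (intro sum.cong) (auto simp: lookup_add lookup_single when_def)
    ultimately show ?thesis using h2 by auto
  qed
  show "pderiv (m + j) P \<in> Pspace m p (q - 1)"
    unfolding Pspace_iff using key by fastforce
  show "q = 0 \<Longrightarrow> pderiv (m + j) P = 0"
    using key by (intro poly_mapping_eqI) fastforce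
qed


lemma Y_Pspace:
  assumes "W \<in> Pspace m p q"
  shows "u_dx m W \<in> Pspace m (p - 1) (q + 1)" "p = 0 \<Longrightarrow> u_dx m W = 0"
proof -
  show "u_dx m W \<in> Pspace m (p - 1) (q + 1)"
    unfolding u_dx_def U_def
  proof (rule Pspace_sum)
    fix j assume j: "j \<in> {..<m}"
    have "var (m + j) * pderiv j W \<in> Pspace m (0 + (p - 1)) (1 + q)"
      using j by (intro Pspace_mult var_Pspace_u pderiv_x_Pspace assms) auto
    then show "var (m + j) * pderiv j W \<in> Pspace m (p - 1) (q + 1)" by (simp add: add.commute)
  qed
  show "p = 0 \<Longrightarrow> u_dx m W = 0"
    unfolding u_dx_def using pderiv_x_Pspace(2)[OF assms] by simp
qed

lemma X_Pspace:
  assumes "W \<in> Pspace m p q"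
  shows "x_du m W \<in> Pspace m (p + 1) (q - 1)" "q = 0 \<Longrightarrow> x_du m W = 0"
proof -
  show "x_du m W \<in> Pspace m (p + 1) (q - 1)"
    unfolding x_du_def X_def
  proof (rule Pspace_sum)
    fix j assume j: "j \<in> {..<m}"
    have "var j * pderiv (m + j) W \<in> Pspace m (1 + p) (0 + (q - 1))"
      using j by (intro Pspace_mult var_Pspace_x pderiv_u_Pspace assms) auto
    then show "var j * pderiv (m + j) W \<in> Pspace m (p + 1) (q - 1)" by (simp add: add.commute)
  qed
  show "q = 0 \<Longrightarrow> x_du m W = 0"
    unfolding x_du_def using pderiv_u_Pspace(2)[OF assms] by simp
qed

lemma D_Pspace:
  assumes "W \<in> Pspace m p q"
  shows "du_dx m W \<in> Pspace m (p - 1) (q - 1)" "p = 0 \<Longrightarrow> du_dx m W = 0" "q = 0 \<Longrightarrow> du_dx m W = 0"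
proof -
  show "du_dx m W \<in> Pspace m (p - 1) (q - 1)"
    unfolding du_dx_def
    by (rule Pspace_sum) (intro pderiv_u_Pspace pderiv_x_Pspace assms; simp)
  show "p = 0 \<Longrightarrow> du_dx m W = 0"
    unfolding du_dx_def using pderiv_x_Pspace(2)[OF assms] by simp
  show "q = 0 \<Longrightarrow> du_dx m W = 0"
    unfolding du_dx_def
    by (rule sum.neutral) (use pderiv_u_Pspace(2)[OF pderiv_x_Pspace(1)[OF assms]] in simp)
qed

lemma lapx_Pspace:
  assumes "W \<in> Pspace m p q"
  shows "lap_x m W \<in> Pspace m (p - 2) q"
  unfolding lap_x_def
proof (rule Pspace_sum)
  fix j assume "j \<in> {..<m}"
  then have "pderiv j (pderiv j W) \<in> Pspace m (p - 1 - 1) q"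
    by (intro pderiv_x_Pspace assms) auto
  then show "pderiv j (pderiv j W) \<in> Pspace m (p - 2) q" by (simp add: diff_diff_add numeral_2_eq_2)
qed

lemma lapu_Pspace:
  assumes "W \<in> Pspace m p q"
  shows "lap_u m W \<in> Pspace m p (q - 2)"
  unfolding lap_u_def
proof (rule Pspace_sum)
  fix j assume "j \<in> {..<m}"
  then have "pderiv (m + j) (pderiv (m + j) W) \<in> Pspace m p (q - 1 - 1)"
    by (intro pderiv_u_Pspace assms) auto
  then show "pderiv (m + j) (pderiv (m + j) W) \<in> Pspace m p (q - 2)" by (simp add: diff_diff_add numeral_2_eq_2)
qed

lemma N_Pspace: "W \<in> Pspace m p q \<Longrightarrow> normx m * W \<in> Pspace m (p + 2) q"
  using Pspace_mult[OF normx_Pspace, of W m p q] by (simp add: add.commute)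
lemma M_Pspace: "W \<in> Pspace m p q \<Longrightarrow> normu m * W \<in> Pspace m p (q + 2)"
  using Pspace_mult[OF normu_Pspace, of W m p q] by (simp add: add.commute)
lemma Q_Pspace: "W \<in> Pspace m p q \<Longrightarrow> ux m * W \<in> Pspace m (p + 1) (q + 1)"
  using Pspace_mult[OF ux_Pspace, of W m p q] by (simp add: add.commute)

lemma lookup_var_pderiv_same: "lk (var j * pderiv j W) a = of_nat (lk a j) * lk W a"
  by (auto simp: lookup_var_mult lookup_pderiv ee_simps)

lemma Ex_Pspace: "W \<in> Pspace m p q \<Longrightarrow> Ex_op m W = of_nat p * W"
proof (rule poly_mapping_eqI)
  fix a assume W: "W \<in> Pspace m p q"
  have "lk (Ex_op m W) a = (\<Sum>j<m. of_nat (lk a j)) * lk W a"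
    by (simp add: Ex_op_def lookup_sum lookup_var_pderiv_same sum_distrib_right)
  also have "\<dots> = of_nat p * lk W a"
  proof (cases "lk W a = 0")
    case False
    then have "(\<Sum>j<m. lk a j) = p" using W by (auto simp: Pspace_iff)
    then show ?thesis by (simp flip: of_nat_sum)
  qed simp
  finally show "lk (Ex_op m W) a = lk (of_nat p * W) a" by (simp add: of_nat_const)
qed

lemma Eu_Pspace: "W \<in> Pspace m p q \<Longrightarrow> Eu_op m W = of_nat q * W"
proof (rule poly_mapping_eqI)
  fix a assume W: "W \<in> Pspace m p q"
  have "lk (Eu_op m W) a = (\<Sum>j<m. of_nat (lk a (m + j))) * lk W a"
    by (simp add: Eu_op_def lookup_sum lookup_var_pderiv_same sum_distrib_right)
  also have "\<dots> = of_nat q * lk W a"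
  proof (cases "lk W a = 0")
    case False
    then have "(\<Sum>j<m. lk a (m + j)) = q" using W by (auto simp: Pspace_iff)
    then show ?thesis by (simp flip: of_nat_sum)
  qed simp
  finally show "lk (Eu_op m W) a = lk (of_nat q * W) a" by (simp add: of_nat_const)
qed

section \<open>Adjoints for the Fischer product\<close>

lemma fischer_N_right: "fischer P (normx m * Q) = fischer (lap_x m P) Q"
proof -
  have "fischer P (normx m * Q) = (\<Sum>j<m. fischer P (var j * (var j * Q)))"
    by (simp add: normx_eq sum_distrib_right mult.assoc fischer_sum_right)
  also have "\<dots> = (\<Sum>j<m. fischer (pderiv j (pderiv j P)) Q)"
    by (simp add: fischer_var_right)
  also have "\<dots> = fischer (lap_x m P) Q"
    by (simp add: lap_x_def fischer_sum_left)
  finally show ?thesis .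
qed

lemma fischer_M_right: "fischer P (normu m * Q) = fischer (lap_u m P) Q"
proof -
  have "fischer P (normu m * Q) = (\<Sum>j<m. fischer P (var (m + j) * (var (m + j) * Q)))"
    by (simp add: normu_eq sum_distrib_right mult.assoc fischer_sum_right)
  also have "\<dots> = (\<Sum>j<m. fischer (pderiv (m + j) (pderiv (m + j) P)) Q)"
    by (simp add: fischer_var_right)
  also have "\<dots> = fischer (lap_u m P) Q"
    by (simp add: lap_u_def fischer_sum_left)
  finally show ?thesis .
qed

lemma fischer_Q_right: "fischer P (ux m * Q) = fischer (du_dx m P) Q"
proof -
  have "fischer P (ux m * Q) = (\<Sum>j<m. fischer P (var (m + j) * (var j * Q)))"
    by (simp add: ux_eq sum_distrib_right mult.assoc fischer_sum_right)
  also have "\<dots> = (\<Sum>j<m. fischer (pderiv (m + j) (pderiv j P)) Q)"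
    by (simp add: fischer_var_right pderiv_comm)
  also have "\<dots> = fischer (du_dx m P) Q"
    by (simp add: du_dx_def fischer_sum_left)
  finally show ?thesis .
qed

lemma fischer_N_left: "fischer (normx m * P) Q = fischer P (lap_x m Q)"
  by (metis fischer_cnj fischer_N_right)
lemma fischer_M_left: "fischer (normu m * P) Q = fischer P (lap_u m Q)"
  by (metis fischer_cnj fischer_M_right)
lemma fischer_Q_left: "fischer (ux m * P) Q = fischer P (du_dx m Q)"
  by (metis fischer_cnj fischer_Q_right)

lemma fischer_Y_left: "fischer (u_dx m P) Q = fischer P (x_du m Q)"
proof -
  have "fischer (u_dx m P) Q = (\<Sum>j<m. fischer (var (m + j) * pderiv j P) Q)"
    by (simp add: u_dx_def U_def fischer_sum_left)
  also have "\<dots> = (\<Sum>j<m. fischer P (var j * pderiv (m + j) Q))"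
    by (simp add: fischer_var_left fischer_var_right)
  also have "\<dots> = fischer P (x_du m Q)"
    by (simp add: x_du_def X_def fischer_sum_right)
  finally show ?thesis .
qed

lemma fischer_X_left: "fischer (x_du m P) Q = fischer P (u_dx m Q)"
  by (metis fischer_cnj fischer_Y_left)


definition inI :: "nat \<Rightarrow> cpoly \<Rightarrow> bool" where
  "inI m Z \<longleftrightarrow> (\<exists>A B. Z = normx m * A + normu m * B)"

lemma inI_0 [simp]: "inI m 0"
  unfolding inI_def by (rule exI[of _ 0], rule exI[of _ 0]) simp
lemma inI_N [simp]: "inI m (normx m * A)"
  unfolding inI_def by (rule exI[of _ A], rule exI[of _ 0]) simp
lemma inI_M [simp]: "inI m (normu m * B)"
  unfolding inI_def by (rule exI[of _ 0], rule exI[of _ B]) simp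
lemma inI_add: "inI m Z \<Longrightarrow> inI m Z' \<Longrightarrow> inI m (Z + Z')"
  unfolding inI_def
proof (elim exE)
  fix A B A' B' assume "Z = normx m * A + normu m * B" "Z' = normx m * A' + normu m * B'"
  then show "\<exists>A B. Z + Z' = normx m * A + normu m * B"
    by (intro exI[of _ "A + A'"] exI[of _ "B + B'"]) (simp add: algebra_simps)
qed
lemma inI_mult: "inI m Z \<Longrightarrow> inI m (C * Z)"
  unfolding inI_def
proof (elim exE)
  fix A B assume "Z = normx m * A + normu m * B"
  then show "\<exists>A B. C * Z = normx m * A + normu m * B"
    by (intro exI[of _ "C * A"] exI[of _ "C * B"]) (simp add: algebra_simps)
qed
lemma inI_mult2: "inI m Z \<Longrightarrow> inI m (Z * C)"
  using inI_mult[of m Z C] by (simp add: mult.commute)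
lemma inI_uminus: "inI m Z \<Longrightarrow> inI m (- Z)"
  using inI_mult[of m Z "-1"] by simp
lemma inI_diff: "inI m Z \<Longrightarrow> inI m Z' \<Longrightarrow> inI m (Z - Z')"
  using inI_add[of m Z "- Z'"] inI_uminus[of m Z'] by simp
lemma inI_sum: "(\<And>s. s \<in> S \<Longrightarrow> inI m (F s)) \<Longrightarrow> inI m (sum F S)"
  by (induction S rule: infinite_finite_induct) (auto intro: inI_add)

lemma kerI:
  assumes "lap_x m Z = 0" "lap_u m Z = 0" "inI m Z"
  shows "Z = 0"
proof -
  obtain A B where Z: "Z = normx m * A + normu m * B" using assms(3) unfolding inI_def by blast
  have "fischer Z Z = fischer Z (normx m * A) + fischer Z (normu m * B)"
    by (subst (2) Z) (simp add: fischer_add_right)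
  also have "\<dots> = 0" by (simp add: fischer_N_right fischer_M_right assms)
  finally show ?thesis by (rule fischer_self_eq0)
qed

lemma kerI_eq:
  assumes "lap_x m Z = 0" "lap_u m Z = 0" "lap_x m Z' = 0" "lap_u m Z' = 0" "inI m (Z - Z')"
  shows "Z = Z'"
  using kerI[of m "Z - Z'"] assms by simp

lemma sum_minus_00:
  "inI m ((\<Sum>a\<le>A. \<Sum>b\<le>B. normx m ^ a * normu m ^ b * G a b) - G 0 0)"
proof -
  have e: "(\<Sum>a\<le>A. \<Sum>b\<le>(B::nat). (if a = 0 \<and> b = 0 then G 0 0 else 0)) = G 0 0"
  proof -
    have "(\<Sum>a\<le>A. \<Sum>b\<le>(B::nat). (if a = 0 \<and> b = 0 then G 0 0 else 0)) =
          (\<Sum>a\<le>(A::nat). (if a = 0 then G 0 0 else 0))"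
      by (rule sum.cong[OF refl]) (auto simp: sum.delta)
    also have "\<dots> = G 0 0" by (simp add: sum.delta)
    finally show ?thesis .
  qed
  have "(\<Sum>a\<le>A. \<Sum>b\<le>B. normx m ^ a * normu m ^ b * G a b) - G 0 0 =
     (\<Sum>a\<le>A. \<Sum>b\<le>B. normx m ^ a * normu m ^ b * G a b - (if a = 0 \<and> b = 0 then G 0 0 else 0))"
    by (simp only: sum_subtractf e)
  also have "inI m \<dots>"
  proof (intro inI_sum)
    fix a b
    show "inI m (normx m ^ a * normu m ^ b * G a b - (if a = 0 \<and> b = 0 then G 0 0 else 0))"
    proof (cases "a = 0")
      case True
      show ?thesis
      proof (cases b)
        case 0 then show ?thesis using True by simp
      next
        case (Suc b')
        have eq: "normx m ^ a * normu m ^ b * G a b - (if a = 0 \<and> b = 0 then G 0 0 else 0)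
           = normu m * (normu m ^ b' * G a b)"
          using True Suc by (simp add: mult.assoc)
        show ?thesis unfolding eq by (rule inI_M)
      qed
    next
      case False
      then obtain a' where a': "a = Suc a'" by (cases a) auto
      have eq: "normx m ^ a * normu m ^ b * G a b - (if a = 0 \<and> b = 0 then G 0 0 else 0)
         = normx m * (normx m ^ a' * normu m ^ b * G a b)"
        using a' by (simp add: mult.assoc)
      show ?thesis unfolding eq by (rule inI_N)
    qed
  qed
  finally show ?thesis .
qed

lemma pis_unique:
  assumes Hs: "\<forall>a\<le>p div 2. \<forall>b\<le>q div 2. Hs a b \<in> Kerlap m (p - 2*a) (q - 2*b)"
    and P: "P = (\<Sum>a\<le>p div 2. \<Sum>b\<le>q div 2. normx m ^ a * normu m ^ b * Hs a b)"
  shows "pis m p q P = Hs 0 0"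
  unfolding pis_def
proof (rule the_equality)
  show "\<exists>Hs'. (\<forall>a\<le>p div 2. \<forall>b\<le>q div 2. Hs' a b \<in> Kerlap m (p - 2*a) (q - 2*b))
      \<and> P = (\<Sum>a\<le>p div 2. \<Sum>b\<le>q div 2. normx m ^ a * normu m ^ b * Hs' a b) \<and> Hs 0 0 = Hs' 0 0"
    using Hs P by blast
next
  fix H assume "\<exists>Hs'. (\<forall>a\<le>p div 2. \<forall>b\<le>q div 2. Hs' a b \<in> Kerlap m (p - 2*a) (q - 2*b))
      \<and> P = (\<Sum>a\<le>p div 2. \<Sum>b\<le>q div 2. normx m ^ a * normu m ^ b * Hs' a b) \<and> H = Hs' 0 0"
  then obtain Hs' where Hs': "\<forall>a\<le>p div 2. \<forall>b\<le>q div 2. Hs' a b \<in> Kerlap m (p - 2*a) (q - 2*b)"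
    and P': "P = (\<Sum>a\<le>p div 2. \<Sum>b\<le>q div 2. normx m ^ a * normu m ^ b * Hs' a b)" and H: "H = Hs' 0 0"
    by blast
  let ?K = "\<lambda>a b. Hs' a b - Hs a b"
  have sum0: "(\<Sum>a\<le>p div 2. \<Sum>b\<le>q div 2. normx m ^ a * normu m ^ b * ?K a b) = 0"
    using P P' by (simp add: right_diff_distrib sum_subtractf)
  have "inI m ((\<Sum>a\<le>p div 2. \<Sum>b\<le>q div 2. normx m ^ a * normu m ^ b * ?K a b) - ?K 0 0)"
    by (rule sum_minus_00)
  then have "inI m (- (Hs' 0 0 - Hs 0 0))"
    by (simp add: sum0)
  then have I: "inI m (Hs' 0 0 - Hs 0 0)"
    using inI_uminus by fastforce
  have "Hs 0 0 \<in> Kerlap m p q" "Hs' 0 0 \<in> Kerlap m p q"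
    using Hs[rule_format, of 0 0] Hs'[rule_format, of 0 0] by simp_all
  then show "H = Hs 0 0" unfolding H
    by (intro kerI_eq[OF _ _ _ _ I]) (auto simp: Kerlap_def)
qed

lemma sum_01:
  assumes "\<And>a. 2 \<le> a \<Longrightarrow> g a = 0" "A = 0 \<Longrightarrow> g 1 = 0"
  shows "(\<Sum>a\<le>(A::nat). g a) = g 0 + (g 1 :: cpoly)"
proof (cases "A = 0")
  case True then show ?thesis using assms by simp
next
  case False
  have "(\<Sum>a\<le>A. g a) = (\<Sum>a\<in>{0,1}. g a)"
    by (rule sum.mono_neutral_right) (use False assms in auto)
  then show ?thesis by simp
qed

lemma pis_id:
  assumes "W \<in> Kerlap m p q"
  shows "pis m p q W = W"
proof -
  define Hs :: "nat \<Rightarrow> nat \<Rightarrow> cpoly" where "Hs = (\<lambda>a b. if a = 0 \<and> b = 0 then W else (0::cpoly))"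
  have 1: "\<forall>a\<le>p div 2. \<forall>b\<le>q div 2. Hs a b \<in> Kerlap m (p - 2*a) (q - 2*b)"
    using assms by (auto simp: Kerlap_def Hs_def)
  have "(\<Sum>a\<le>p div 2. \<Sum>b\<le>q div 2. normx m ^ a * normu m ^ b * Hs a b)
       = (\<Sum>a\<le>p div 2. if a = 0 then W else 0)"
    by (rule sum.cong[OF refl]) (auto simp: Hs_def if_distrib[of "\<lambda>x. _ * x"] sum.delta cong: if_cong)
  also have "\<dots> = W" by (simp add: sum.delta)
  finally have 2: "W = (\<Sum>a\<le>p div 2. \<Sum>b\<le>q div 2. normx m ^ a * normu m ^ b * Hs a b)" by simp
  show ?thesis using pis_unique[OF 1 2] by (simp add: Hs_def)
qed


lemma const_left_commute: "normx m * (const c * Q) = const c * (normx m * Q)"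
  "normu m * (const c * Q) = const c * (normu m * Q)"
  "ux m * (const c * Q) = const c * (ux m * Q)"
  "normx m ^ a * (const c * Q) = const c * (normx m ^ a * Q)"
  "normu m ^ a * (const c * Q) = const c * (normu m ^ a * Q)"
  by (simp_all add: mult.left_commute)
lemma const_assoc: "const a * (const b * P) = const (a * b) * P"
  by (simp add: mult.assoc[symmetric])
lemma lookup_mult_const [simp]: "lk (P * const c) b = c * lk P b"
  by (simp add: mult.commute[of P])
lemmas cs = const_left_commute const_assoc of_nat_const numeral_const

section \<open>The S_u ladder on simplicial harmonics\<close>

lemma Yj_props:
  assumes H: "H \<in> Harm m p0 q0"
  shows "(u_dx m ^^ j) H \<in> Pspace m (p0 - j) (q0 + j) \<and> lap_x m ((u_dx m ^^ j) H) = 0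
    \<and> lap_u m ((u_dx m ^^ j) H) = 0 \<and> du_dx m ((u_dx m ^^ j) H) = 0"
proof (induction j)
  case 0
  then show ?case using H by (simp add: Harm_def)
next
  case (Suc j)
  let ?Z = "(u_dx m ^^ j) H"
  have "u_dx m ?Z \<in> Pspace m (p0 - j - 1) (q0 + j + 1)"
    using Suc by (intro Y_Pspace) auto
  then show ?case using Suc by (simp add: lapx_Y lapu_Y D_Y)
qed

lemma Yj_Kerlap: "H \<in> Harm m p0 q0 \<Longrightarrow> (u_dx m ^^ j) H \<in> Kerlap m (p0 - j) (q0 + j)"
  using Yj_props[of H m p0 q0 j] by (simp add: Kerlap_def)

lemma XYj:
  assumes H: "H \<in> Harm m p0 q0"
  shows "\<exists>c. x_du m ((u_dx m ^^ Suc j) H) = const c * (u_dx m ^^ j) H"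
proof (induction j)
  case 0
  have XH: "x_du m H = 0" using H by (simp add: Harm_def)
  have HP: "H \<in> Pspace m p0 q0" using H by (simp add: Harm_def)
  have "x_du m (u_dx m H) = const (of_nat p0 - of_nat q0) * H"
    unfolding XY_comm XH Ex_Pspace[OF HP] Eu_Pspace[OF HP]
    by (rule poly_mapping_eqI) (simp add: lookup_add lookup_minus cs; simp add: algebra_simps)
  then show ?case by auto
next
  case (Suc j)
  then obtain c where c: "x_du m ((u_dx m ^^ Suc j) H) = const c * (u_dx m ^^ j) H" by blast
  let ?Z = "(u_dx m ^^ Suc j) H"
  have ZP: "?Z \<in> Pspace m (p0 - Suc j) (q0 + Suc j)" using Yj_props[OF H] by blast
  have "x_du m (u_dx m ?Z) = u_dx m (x_du m ?Z) + Ex_op m ?Z - Eu_op m ?Z" by (rule XY_comm)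
  also have "\<dots> = const (c + of_nat (p0 - Suc j) - of_nat (q0 + Suc j)) * ?Z"
    unfolding c Ex_Pspace[OF ZP] Eu_Pspace[OF ZP]
    by (rule poly_mapping_eqI) (simp add: lookup_add lookup_minus cs del: of_nat_add of_nat_Suc; simp add: algebra_simps)
  finally show ?case by auto
qed

lemma Xpow_Yj:
  assumes H: "H \<in> Harm m p0 q0"
  shows "\<exists>c. (x_du m ^^ k) ((u_dx m ^^ j) H) = (if k \<le> j then const c * (u_dx m ^^ (j - k)) H else 0)"
proof (induction k)
  case 0
  then show ?case by (intro exI[of _ 1]) simp
next
  case (Suc k)
  then obtain c where c: "(x_du m ^^ k) ((u_dx m ^^ j) H) = (if k \<le> j then const c * (u_dx m ^^ (j - k)) H else 0)"
    by blast
  show ?case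
  proof (cases "k < j")
    case True
    then obtain r where r: "j - k = Suc r" by (cases "j - k") auto
    obtain c' where c': "x_du m ((u_dx m ^^ Suc r) H) = const c' * (u_dx m ^^ r) H"
      using XYj[OF H] by blast
    have "(x_du m ^^ Suc k) ((u_dx m ^^ j) H) = const (c * c') * (u_dx m ^^ r) H"
      using True by (simp add: c r c'[simplified] mult.assoc)
    moreover have "r = j - Suc k" using r by simp
    ultimately show ?thesis using True by auto
  next
    case False
    have XH: "x_du m H = 0" using H by (simp add: Harm_def)
    have "(x_du m ^^ Suc k) ((u_dx m ^^ j) H) = 0"
      using False by (auto simp: c XH)
    then show ?thesis using False by auto
  qed
qed

lemma su_iter_eq:
  assumes H: "H \<in> Harm m p0 q0"
  shows "su_iter m j p0 q0 H = (u_dx m ^^ j) H"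
proof (induction j)
  case 0
  then show ?case by simp
next
  case (Suc j)
  have "su_iter m (Suc j) p0 q0 H = pis m (p0 - Suc j) (q0 + Suc j) ((u_dx m ^^ Suc j) H)"
    by (simp add: Suc)
  also have "\<dots> = (u_dx m ^^ Suc j) H"
    by (rule pis_id) (rule Yj_Kerlap[OF H])
  finally show ?case .
qed

lemma Npow_Pspace: "R \<in> Pspace m p q \<Longrightarrow> normx m ^ a * R \<in> Pspace m (p + 2 * a) q"
proof (induction a)
  case (Suc a)
  then have "normx m * (normx m ^ a * R) \<in> Pspace m (p + 2 * a + 2) q" by (intro N_Pspace) auto
  then show ?case by (simp add: mult.assoc)
qed simp

lemma Mpow_Pspace: "R \<in> Pspace m p q \<Longrightarrow> normu m ^ b * R \<in> Pspace m p (q + 2 * b)"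
proof (induction b)
  case (Suc b)
  then have "normu m * (normu m ^ b * R) \<in> Pspace m p (q + 2 * b + 2)" by (intro M_Pspace) auto
  then show ?case by (simp add: mult.assoc)
qed simp

lemma lapx_Npow_Suc:
  assumes "lap_x m R = 0" "R \<in> Pspace m p q"
  shows "\<exists>c. lap_x m (normx m ^ Suc a * R) = const c * (normx m ^ a * R)"
proof (induction a)
  case 0
  have "lap_x m (normx m * R) = const (2 * of_nat m + 4 * of_nat p) * R"
    unfolding lapx_N Ex_Pspace[OF assms(2)] assms(1)
    by (rule poly_mapping_eqI) (simp add: lookup_add lookup_minus cs; simp add: algebra_simps)
  then show ?case by auto
next
  case (Suc a)
  then obtain c where c: "lap_x m (normx m ^ Suc a * R) = const c * (normx m ^ a * R)" by blast
  have ZP: "normx m ^ Suc a * R \<in> Pspace m (p + 2 * Suc a) q" by (rule Npow_Pspace[OF assms(2)])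
  have "lap_x m (normx m ^ Suc (Suc a) * R) = lap_x m (normx m * (normx m ^ Suc a * R))"
    by (simp add: mult.assoc)
  also have "\<dots> = const (2 * of_nat m + 4 * of_nat (p + 2 * Suc a) + c) * (normx m ^ Suc a * R)"
    unfolding lapx_N c Ex_Pspace[OF ZP]
    by (rule poly_mapping_eqI) (simp add: lookup_add lookup_minus cs del: of_nat_add of_nat_Suc of_nat_mult; simp add: algebra_simps)
  finally show ?case by blast
qed

lemma lapu_Mpow_Suc:
  assumes "lap_u m R = 0" "R \<in> Pspace m p q"
  shows "\<exists>c. lap_u m (normu m ^ Suc b * R) = const c * (normu m ^ b * R)"
proof (induction b)
  case 0
  have "lap_u m (normu m * R) = const (2 * of_nat m + 4 * of_nat q) * R"
    unfolding lapu_M Eu_Pspace[OF assms(2)] assms(1)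
    by (rule poly_mapping_eqI) (simp add: lookup_add lookup_minus cs; simp add: algebra_simps)
  then show ?case by auto
next
  case (Suc b)
  then obtain c where c: "lap_u m (normu m ^ Suc b * R) = const c * (normu m ^ b * R)" by blast
  have ZP: "normu m ^ Suc b * R \<in> Pspace m p (q + 2 * Suc b)" by (rule Mpow_Pspace[OF assms(2)])
  have "lap_u m (normu m ^ Suc (Suc b) * R) = lap_u m (normu m * (normu m ^ Suc b * R))"
    by (simp add: mult.assoc)
  also have "\<dots> = const (2 * of_nat m + 4 * of_nat (q + 2 * Suc b) + c) * (normu m ^ Suc b * R)"
    unfolding lapu_M c Eu_Pspace[OF ZP]
    by (rule poly_mapping_eqI) (simp add: lookup_add lookup_minus cs del: of_nat_add of_nat_Suc of_nat_mult; simp add: algebra_simps)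
  finally show ?case by blast
qed

lemma lapx_pow_Npow:
  assumes "lap_x m R = 0" "R \<in> Pspace m p q"
  shows "\<exists>c. (lap_x m ^^ k) (normx m ^ a * R) = (if k \<le> a then const c * (normx m ^ (a - k) * R) else 0)"
proof (induction k)
  case 0
  then show ?case by (intro exI[of _ 1]) simp
next
  case (Suc k)
  then obtain c where c: "(lap_x m ^^ k) (normx m ^ a * R) = (if k \<le> a then const c * (normx m ^ (a - k) * R) else 0)"
    by blast
  show ?case
  proof (cases "k < a")
    case True
    then obtain r where r: "a - k = Suc r" by (cases "a - k") auto
    obtain c' where c': "lap_x m (normx m ^ Suc r * R) = const c' * (normx m ^ r * R)"
      using lapx_Npow_Suc[OF assms] by blast
    have c'': "lap_x m (normx m * (normx m ^ r * R)) = const c' * (normx m ^ r * R)"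
      using c' by (simp add: mult.assoc)
    have "(lap_x m ^^ Suc k) (normx m ^ a * R) = const (c * c') * (normx m ^ r * R)"
      using True by (simp add: c r c'' mult.assoc)
    moreover have "r = a - Suc k" using r by simp
    ultimately show ?thesis using True by auto
  next
    case False
    have "(lap_x m ^^ Suc k) (normx m ^ a * R) = 0"
      using False assms by (auto simp: c)
    then show ?thesis using False by auto
  qed
qed

lemma lapu_pow_Mpow:
  assumes "lap_u m R = 0" "R \<in> Pspace m p q"
  shows "\<exists>c. (lap_u m ^^ k) (normu m ^ b * R) = (if k \<le> b then const c * (normu m ^ (b - k) * R) else 0)"
proof (induction k)
  case 0
  then show ?case by (intro exI[of _ 1]) simp
next
  case (Suc k)
  then obtain c where c: "(lap_u m ^^ k) (normu m ^ b * R) = (if k \<le> b then const c * (normu m ^ (b - k) * R) else 0)"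
    by blast
  show ?case
  proof (cases "k < b")
    case True
    then obtain r where r: "b - k = Suc r" by (cases "b - k") auto
    obtain c' where c': "lap_u m (normu m ^ Suc r * R) = const c' * (normu m ^ r * R)"
      using lapu_Mpow_Suc[OF assms] by blast
    have c'': "lap_u m (normu m * (normu m ^ r * R)) = const c' * (normu m ^ r * R)"
      using c' by (simp add: mult.assoc)
    have "(lap_u m ^^ Suc k) (normu m ^ b * R) = const (c * c') * (normu m ^ r * R)"
      using True by (simp add: c r c'' mult.assoc)
    moreover have "r = b - Suc k" using r by simp
    ultimately show ?thesis using True by auto
  next
    case False
    have "(lap_u m ^^ Suc k) (normu m ^ b * R) = 0"
      using False assms by (auto simp: c)
    then show ?thesis using False by auto
  qed
qed

lemma lapx_Mpow: "lap_x m (normu m ^ b * Z) = normu m ^ b * lap_x m Z"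
  by (induction b arbitrary: Z) (simp_all add: mult.assoc lapx_M)
lemma lapu_Npow: "lap_u m (normx m ^ a * Z) = normx m ^ a * lap_u m Z"
  by (induction a arbitrary: Z) (simp_all add: mult.assoc lapu_N)
lemma lapu_pow_Npow: "(lap_u m ^^ k) (normx m ^ a * Z) = normx m ^ a * (lap_u m ^^ k) Z"
  by (induction k) (simp_all add: lapu_Npow)

lemma fischer_Npow_right: "fischer P (normx m ^ a * Q) = fischer ((lap_x m ^^ a) P) Q"
  by (induction a arbitrary: P) (simp_all add: mult.assoc fischer_N_right funpow_Suc_right del: funpow.simps)
lemma fischer_Mpow_right: "fischer P (normu m ^ b * Q) = fischer ((lap_u m ^^ b) P) Q"
  by (induction b arbitrary: P) (simp_all add: mult.assoc fischer_M_right funpow_Suc_right del: funpow.simps)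
lemma fischer_Ypow_left: "fischer ((u_dx m ^^ j) P) Q = fischer P ((x_du m ^^ j) Q)"
proof (induction j arbitrary: P Q)
  case (Suc j)
  have "fischer ((u_dx m ^^ Suc j) P) Q = fischer (u_dx m ((u_dx m ^^ j) P)) Q" by simp
  also have "\<dots> = fischer ((u_dx m ^^ j) P) (x_du m Q)" by (rule fischer_Y_left)
  also have "\<dots> = fischer P ((x_du m ^^ j) (x_du m Q))" by (rule Suc)
  also have "\<dots> = fischer P ((x_du m ^^ Suc j) Q)" by (simp only: funpow_Suc_right o_def)
  finally show ?case .
qed simp


definition dd :: "nat \<Rightarrow> nat \<Rightarrow> complex" where "dd m p = of_nat m + 2 * of_nat p - 2"

lemma dd_nz: "4 < m \<Longrightarrow> dd m p \<noteq> 0"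
proof -
  assume "4 < m"
  then have "real m + 2 * real p - 2 > 0" by simp
  then have "real m + 2 * real p - 2 \<noteq> 0" by linarith
  then have "complex_of_real (real m + 2 * real p - 2) \<noteq> 0" by (simp only: of_real_eq_0_iff not_False_eq_True)
  moreover have "dd m p = complex_of_real (real m + 2 * real p - 2)" by (simp add: dd_def)
  ultimately show ?thesis by simp
qed

definition ci :: "nat \<Rightarrow> nat \<Rightarrow> complex" where "ci m p = 1 / dd m p"

definition Cf :: "nat \<Rightarrow> nat \<Rightarrow> nat \<Rightarrow> cpoly \<Rightarrow> cpoly" where
  "Cf m p q W = ux m * W - const (ci m p) * (normx m * u_dx m W)
     - const (ci m q) * (normu m * x_du m W)
     + const (ci m p) * (const (ci m q) * (normx m * (normu m * du_dx m W)))"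

lemma Ex_Y: "W \<in> Pspace m p q \<Longrightarrow> Ex_op m (u_dx m W) = const (of_nat p - 1) * u_dx m W"
proof (cases "p = 0")
  case True
  assume W: "W \<in> Pspace m p q"
  then show ?thesis using Y_Pspace(2)[OF W] True by (simp add: Ex_op_def)
next
  case False
  assume W: "W \<in> Pspace m p q"
  show ?thesis using Ex_Pspace[OF Y_Pspace(1)[OF W]] False by (simp add: of_nat_const of_nat_diff)
qed

lemma Eu_X: "W \<in> Pspace m p q \<Longrightarrow> Eu_op m (x_du m W) = const (of_nat q - 1) * x_du m W"
proof (cases "q = 0")
  case True
  assume W: "W \<in> Pspace m p q"
  then show ?thesis using X_Pspace(2)[OF W] True by (simp add: Eu_op_def)
next
  case False
  assume W: "W \<in> Pspace m p q"
  show ?thesis using Eu_Pspace[OF X_Pspace(1)[OF W]] False by (simp add: of_nat_const of_nat_diff)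
qed

lemma Ex_D: "W \<in> Pspace m p q \<Longrightarrow> Ex_op m (du_dx m W) = const (of_nat p - 1) * du_dx m W"
proof (cases "p = 0")
  case True
  assume W: "W \<in> Pspace m p q"
  then show ?thesis using D_Pspace(2)[OF W] True by (simp add: Ex_op_def)
next
  case False
  assume W: "W \<in> Pspace m p q"
  show ?thesis using Ex_Pspace[OF D_Pspace(1)[OF W]] False by (simp add: of_nat_const of_nat_diff)
qed

lemma Eu_D: "W \<in> Pspace m p q \<Longrightarrow> Eu_op m (du_dx m W) = const (of_nat q - 1) * du_dx m W"
proof (cases "q = 0")
  case True
  assume W: "W \<in> Pspace m p q"
  then show ?thesis using D_Pspace(3)[OF W] True by (simp add: Eu_op_def)
next
  case False
  assume W: "W \<in> Pspace m p q"
  show ?thesis using Eu_Pspace[OF D_Pspace(1)[OF W]] False by (simp add: of_nat_const of_nat_diff)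
qed

lemma Ex_MD: "W \<in> Pspace m p q \<Longrightarrow> Ex_op m (normu m * du_dx m W) = const (of_nat p - 1) * (normu m * du_dx m W)"
proof (cases "p = 0")
  case True
  assume W: "W \<in> Pspace m p q"
  then show ?thesis using D_Pspace(2)[OF W] True by (simp add: Ex_op_def)
next
  case False
  assume W: "W \<in> Pspace m p q"
  show ?thesis using Ex_Pspace[OF M_Pspace[OF D_Pspace(1)[OF W]]] False by (simp add: of_nat_const of_nat_diff)
qed

lemma Eu_ND: "W \<in> Pspace m p q \<Longrightarrow> Eu_op m (normx m * du_dx m W) = const (of_nat q - 1) * (normx m * du_dx m W)"
proof (cases "q = 0")
  case True
  assume W: "W \<in> Pspace m p q"
  then show ?thesis using D_Pspace(3)[OF W] True by (simp add: Eu_op_def)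
next
  case False
  assume W: "W \<in> Pspace m p q"
  show ?thesis using Eu_Pspace[OF N_Pspace[OF D_Pspace(1)[OF W]]] False by (simp add: of_nat_const of_nat_diff)
qed

section \<open>The operator C\<close>

lemma dd_coef: "4 < m \<Longrightarrow> ci m p * (2 * of_nat m + 4 * (of_nat p - 1)) = 2"
  using dd_nz[of m p] by (simp add: field_simps dd_def ci_def)

lemma dd_coef2: "4 < m \<Longrightarrow> ci m p * c * (2 * of_nat m + 4 * (of_nat p - 1)) - 2 * c = 0"
proof -
  assume m: "4 < m"
  have "ci m p * c * (2 * of_nat m + 4 * (of_nat p - 1)) = c * (ci m p * (2 * of_nat m + 4 * (of_nat p - 1)))"
    by (simp only: ac_simps)
  also have "\<dots> = c * 2" by (simp only: dd_coef[OF m])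
  finally show ?thesis by simp
qed

lemma KerD: "W \<in> Kerlap m p q \<Longrightarrow> lap_x m (du_dx m W) = 0 \<and> lap_u m (du_dx m W) = 0"
  by (simp add: Kerlap_def flip: D_lapx D_lapu)

lemma lapx_Cf:
  assumes W: "W \<in> Kerlap m p q" and m: "4 < m"
  shows "lap_x m (Cf m p q W) = 0"
proof -
  have WP: "W \<in> Pspace m p q" and L: "lap_x m W = 0" "lap_u m W = 0" using W by (auto simp: Kerlap_def)
  have LD: "lap_x m (du_dx m W) = 0" using KerD[OF W] by simp
  have "lap_x m (Cf m p q W) =
     const (2 - ci m p * (2 * of_nat m + 4 * (of_nat p - 1))) * u_dx m W
     + const (ci m p * ci m q * (2 * of_nat m + 4 * (of_nat p - 1)) - 2 * ci m q) * (normu m * du_dx m W)"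
    unfolding Cf_def
    apply (simp add: lapx_Q lapx_N lapx_M lapx_Y lapx_X L LD Ex_Y[OF WP] Ex_MD[OF WP])
    apply (rule poly_mapping_eqI)
    apply (simp add: lookup_add lookup_minus cs)
    apply (simp add: algebra_simps)
    done
  also have "\<dots> = 0" by (simp only: dd_coef[OF m] dd_coef2[OF m] diff_self const_zero mult_zero_left add_0)
  finally show ?thesis .
qed

lemma lapu_Cf:
  assumes W: "W \<in> Kerlap m p q" and m: "4 < m"
  shows "lap_u m (Cf m p q W) = 0"
proof -
  have WP: "W \<in> Pspace m p q" and L: "lap_x m W = 0" "lap_u m W = 0" using W by (auto simp: Kerlap_def)
  have LD: "lap_u m (du_dx m W) = 0" using KerD[OF W] by simp
  have "lap_u m (Cf m p q W) =
     const (2 - ci m q * (2 * of_nat m + 4 * (of_nat q - 1))) * x_du m W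
     + const (ci m q * ci m p * (2 * of_nat m + 4 * (of_nat q - 1)) - 2 * ci m p) * (normx m * du_dx m W)"
    unfolding Cf_def
    apply (simp add: lapu_Q lapu_N lapu_M lapu_Y lapu_X L LD Eu_X[OF WP] Eu_D[OF WP])
    apply (rule poly_mapping_eqI)
    apply (simp add: lookup_add lookup_minus cs distrib_left)
    apply (simp add: algebra_simps)
    done
  also have "\<dots> = 0" by (simp only: dd_coef[OF m] dd_coef2[OF m] diff_self const_zero mult_zero_left add_0)
  finally show ?thesis .
qed

lemma Cf_Pspace:
  assumes WP: "W \<in> Pspace m p q"
  shows "Cf m p q W \<in> Pspace m (p + 1) (q + 1)"
proof -
  have 1: "ux m * W \<in> Pspace m (p + 1) (q + 1)" by (rule Q_Pspace[OF WP])
  have 2: "normx m * u_dx m W \<in> Pspace m (p + 1) (q + 1)"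
  proof (cases "p = 0")
    case True then show ?thesis using Y_Pspace(2)[OF WP] by simp
  next
    case False
    then show ?thesis using N_Pspace[OF Y_Pspace(1)[OF WP]] by simp
  qed
  have 3: "normu m * x_du m W \<in> Pspace m (p + 1) (q + 1)"
  proof (cases "q = 0")
    case True then show ?thesis using X_Pspace(2)[OF WP] by simp
  next
    case False
    then show ?thesis using M_Pspace[OF X_Pspace(1)[OF WP]] by simp
  qed
  have 4: "normx m * (normu m * du_dx m W) \<in> Pspace m (p + 1) (q + 1)"
  proof (cases "p = 0 \<or> q = 0")
    case True then show ?thesis using D_Pspace(2,3)[OF WP] by auto
  next
    case False
    then show ?thesis using N_Pspace[OF M_Pspace[OF D_Pspace(1)[OF WP]]] by simp
  qed
  show ?thesis unfolding Cf_def
    by (intro Pspace_add Pspace_diff Pspace_const 1 2 3 4)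
qed

lemma Cf_Kerlap:
  assumes W: "W \<in> Kerlap m p q" and m: "4 < m"
  shows "Cf m p q W \<in> Kerlap m (p + 1) (q + 1)"
  using Cf_Pspace lapx_Cf[OF W m] lapu_Cf[OF W m] W by (auto simp: Kerlap_def)

lemma Kerlap_const: "W \<in> Kerlap m p q \<Longrightarrow> const c * W \<in> Kerlap m p q"
  by (simp add: Kerlap_def Pspace_const)
lemma Kerlap_zero [simp]: "0 \<in> Kerlap m p q"
  by (simp add: Kerlap_def)

lemma D_Kerlap: "W \<in> Kerlap m p q \<Longrightarrow> du_dx m W \<in> Kerlap m (p - 1) (q - 1)"
  using KerD[of W m p q] D_Pspace(1)[of W m p q] by (simp add: Kerlap_def)

lemma pis_C:
  assumes W: "W \<in> Kerlap m p q" and m: "4 < m"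
  shows "pis m (p + 1) (q + 1) (ux m * W) = Cf m p q W"
proof -
  have WP: "W \<in> Pspace m p q" and L: "lap_x m W = 0" "lap_u m W = 0" using W by (auto simp: Kerlap_def)
  have LD: "lap_x m (du_dx m W) = 0" "lap_u m (du_dx m W) = 0" using KerD[OF W] by auto
  define S0 where "S0 = u_dx m W - const (ci m q) * (normu m * du_dx m W)"
  define X0 where "X0 = x_du m W - const (ci m p) * (normx m * du_dx m W)"
  define Hs :: "nat \<Rightarrow> nat \<Rightarrow> cpoly" where "Hs = (\<lambda>a b. if a = 0 \<and> b = 0 then Cf m p q W
     else if a = 1 \<and> b = 0 then const (ci m p) * S0
     else if a = 0 \<and> b = 1 then const (ci m q) * X0
     else if a = 1 \<and> b = 1 then const (ci m p) * (const (ci m q) * du_dx m W) else 0)"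
  have p0: "p = 0 \<Longrightarrow> S0 = 0 \<and> du_dx m W = 0"
    using Y_Pspace(2)[OF WP] D_Pspace(2)[OF WP] by (simp add: S0_def)
  have q0: "q = 0 \<Longrightarrow> X0 = 0 \<and> du_dx m W = 0"
    using X_Pspace(2)[OF WP] D_Pspace(3)[OF WP] by (simp add: X0_def)
  have S0K: "p \<noteq> 0 \<Longrightarrow> S0 \<in> Kerlap m (p - 1) (q + 1)"
  proof -
    assume p: "p \<noteq> 0"
    have "S0 \<in> Pspace m (p - 1) (q + 1)"
    proof (cases "q = 0")
      case True then show ?thesis using Y_Pspace(1)[OF WP] q0 by (simp add: S0_def)
    next
      case False
      then show ?thesis unfolding S0_def
        using M_Pspace[OF D_Pspace(1)[OF WP]] Y_Pspace(1)[OF WP]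
        by (intro Pspace_diff Pspace_const) auto
    qed
    moreover have "lap_x m S0 = 0"
      by (simp add: S0_def lapx_Y lapx_M L LD)
    moreover have "lap_u m S0 = 0"
    proof -
      have "lap_u m S0 = const (2 - ci m q * (2 * of_nat m + 4 * (of_nat q - 1))) * du_dx m W"
        unfolding S0_def
        apply (simp add: lapu_Y lapu_M L LD Eu_D[OF WP])
        apply (rule poly_mapping_eqI)
        apply (simp add: lookup_add lookup_minus cs distrib_left)
        apply (simp add: algebra_simps)
        done
      also have "\<dots> = 0" by (simp only: dd_coef[OF m] diff_self const_zero mult_zero_left)
      finally show ?thesis .
    qed
    ultimately show ?thesis by (simp add: Kerlap_def)
  qed
  have X0K: "q \<noteq> 0 \<Longrightarrow> X0 \<in> Kerlap m (p + 1) (q - 1)"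
  proof -
    assume q: "q \<noteq> 0"
    have "X0 \<in> Pspace m (p + 1) (q - 1)"
    proof (cases "p = 0")
      case True then show ?thesis using X_Pspace(1)[OF WP] p0 by (simp add: X0_def)
    next
      case False
      then show ?thesis unfolding X0_def
        using N_Pspace[OF D_Pspace(1)[OF WP]] X_Pspace(1)[OF WP]
        by (intro Pspace_diff Pspace_const) auto
    qed
    moreover have "lap_u m X0 = 0"
      by (simp add: X0_def lapu_X lapu_N L LD)
    moreover have "lap_x m X0 = 0"
    proof -
      have "lap_x m X0 = const (2 - ci m p * (2 * of_nat m + 4 * (of_nat p - 1))) * du_dx m W"
        unfolding X0_def
        apply (simp add: lapx_X lapx_N L LD Ex_D[OF WP])
        apply (rule poly_mapping_eqI)
        apply (simp add: lookup_add lookup_minus cs distrib_left)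
        apply (simp add: algebra_simps)
        done
      also have "\<dots> = 0" by (simp only: dd_coef[OF m] diff_self const_zero mult_zero_left)
      finally show ?thesis .
    qed
    ultimately show ?thesis by (simp add: Kerlap_def)
  qed
  have 1: "\<forall>a\<le>(p + 1) div 2. \<forall>b\<le>(q + 1) div 2. Hs a b \<in> Kerlap m (p + 1 - 2*a) (q + 1 - 2*b)"
  proof (intro allI impI)
    fix a b assume a: "a \<le> (p + 1) div 2" and b: "b \<le> (q + 1) div 2"
    show "Hs a b \<in> Kerlap m (p + 1 - 2*a) (q + 1 - 2*b)"
    proof -
      consider "a = 0 \<and> b = 0" | "a = 1 \<and> b = 0" | "a = 0 \<and> b = 1" | "a = 1 \<and> b = 1"
        | "\<not> (a \<le> 1 \<and> b \<le> 1)" by linarith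
      then show ?thesis
      proof cases
        case 1 then show ?thesis using Cf_Kerlap[OF W m] by (simp add: Hs_def)
      next
        case 2
        then have "p \<noteq> 0" using a by auto
        then show ?thesis using 2 S0K Kerlap_const by (simp add: Hs_def)
      next
        case 3
        then have "q \<noteq> 0" using b by auto
        then show ?thesis using 3 X0K Kerlap_const by (simp add: Hs_def)
      next
        case 4
        then have "p \<noteq> 0" "q \<noteq> 0" using a b by auto
        then show ?thesis using 4 D_Kerlap[OF W] Kerlap_const by (simp add: Hs_def)
      next
        case 5 then show ?thesis by (auto simp: Hs_def)
      qed
    qed
  qed
  have inner: "(\<Sum>b\<le>(q + 1) div 2. normx m ^ a * normu m ^ b * Hs a b)
      = normx m ^ a * Hs a 0 + normx m ^ a * normu m * Hs a 1" for a
    by (subst sum_01) (auto simp: Hs_def q0)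
  have "(\<Sum>a\<le>(p + 1) div 2. \<Sum>b\<le>(q + 1) div 2. normx m ^ a * normu m ^ b * Hs a b)
     = (\<Sum>a\<le>(p + 1) div 2. normx m ^ a * Hs a 0 + normx m ^ a * normu m * Hs a 1)"
    by (simp only: inner)
  also have "\<dots> = Hs 0 0 + normu m * Hs 0 1 + (normx m * Hs 1 0 + normx m * normu m * Hs 1 1)"
    by (subst sum_01) (auto simp: Hs_def p0)
  also have "\<dots> = ux m * W"
    by (simp add: Hs_def Cf_def S0_def X0_def algebra_simps)
  finally have 2: "ux m * W = (\<Sum>a\<le>(p + 1) div 2. \<Sum>b\<le>(q + 1) div 2. normx m ^ a * normu m ^ b * Hs a b)"
    by simp
  show ?thesis using pis_unique[OF 1 2] by (simp add: Hs_def)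
qed


lemma c_iter_props:
  assumes G: "G \<in> Kerlap m p1 q1" and m: "4 < m"
  shows "c_iter m i p1 q1 G \<in> Kerlap m (p1 + i) (q1 + i) \<and>
    c_iter m (Suc i) p1 q1 G = Cf m (p1 + i) (q1 + i) (c_iter m i p1 q1 G)"
proof (induction i)
  case 0
  have "c_iter m (Suc 0) p1 q1 G = pis m (p1 + 1) (q1 + 1) (ux m * G)" by simp
  also have "\<dots> = Cf m p1 q1 G" by (rule pis_C[OF G m])
  finally show ?case using G by simp
next
  case (Suc i)
  have K: "c_iter m (Suc i) p1 q1 G \<in> Kerlap m (p1 + Suc i) (q1 + Suc i)"
    using Suc Cf_Kerlap[OF _ m] by simp
  have "c_iter m (Suc (Suc i)) p1 q1 G = pis m (p1 + Suc (Suc i)) (q1 + Suc (Suc i)) (ux m * c_iter m (Suc i) p1 q1 G)"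
    by simp
  also have "\<dots> = pis m (p1 + Suc i + 1) (q1 + Suc i + 1) (ux m * c_iter m (Suc i) p1 q1 G)"
    by simp
  also have "\<dots> = Cf m (p1 + Suc i) (q1 + Suc i) (c_iter m (Suc i) p1 q1 G)"
    by (rule pis_C[OF K m])
  finally show ?case using K by simp
qed

lemma XY_Cf:
  "x_du m (u_dx m (Cf m p q W)) =
     2 * (ux m * W) + ux m * x_du m (u_dx m W) - 2 * const (ci m p) * (ux m * x_du m (u_dx m W))
     - 2 * const (ci m q) * (ux m * u_dx m (x_du m W))
     + 4 * const (ci m p) * const (ci m q) * (ux m * (ux m * du_dx m W))
     + normx m * (u_dx m W - 2 * const (ci m p) * u_dx m W - const (ci m p) * x_du m (u_dx m (u_dx m W))
        + 2 * const (ci m p) * const (ci m q) * (normu m * du_dx m W)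
        + 2 * const (ci m p) * const (ci m q) * (ux m * u_dx m (du_dx m W))
        + const (ci m p) * const (ci m q) * (normu m * x_du m (u_dx m (du_dx m W))))
     + normu m * (x_du m W - const (ci m q) * x_du m (u_dx m (x_du m W))
        + 2 * const (ci m p) * const (ci m q) * (ux m * x_du m (du_dx m W)))"
  unfolding Cf_def
  by (simp add: X_N X_M X_Q Y_N Y_M Y_Q del: const_mult_const; simp add: algebra_simps del: const_mult_const)

lemma D_Cf:
  "du_dx m (Cf m p q W) =
     of_nat m * W + Ex_op m W + Eu_op m W + ux m * du_dx m W
     - 2 * const (ci m p) * x_du m (u_dx m W) - 2 * const (ci m q) * u_dx m (x_du m W)
     + 4 * const (ci m p) * const (ci m q) * (ux m * du_dx m W)
     + normx m * (const (ci m p) * const (ci m q) * (normu m * du_dx m (du_dx m W) + 2 * u_dx m (du_dx m W))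
         - const (ci m p) * (u_dx m (du_dx m W) + lap_x m W))
     + normu m * (2 * const (ci m p) * const (ci m q) * x_du m (du_dx m W)
         - const (ci m q) * (x_du m (du_dx m W) + lap_u m W))"
  unfolding Cf_def
  by (simp add: D_N D_M D_Q D_X D_Y X_M del: const_mult_const; simp add: algebra_simps del: const_mult_const)

lemma const_diff: "const (x - y) = const x - const y"
  by (simp add: const_def single_diff)
lemma const_numeral: "const (numeral n) = numeral n"
  by (simp add: const_def)
lemma const_of_nat: "const (of_nat n) = of_nat n"
  by (simp add: const_def)
lemmas const_hom = const_add const_diff const_mult_const[symmetric] const_numeral const_of_nat const_one const_zero

lemma YX_eq: "W \<in> Pspace m p q \<Longrightarrow> u_dx m (x_du m W) = x_du m (u_dx m W) - of_nat p * W + of_nat q * W"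
  using XY_comm[of m W] Ex_Pspace[of W m p q] Eu_Pspace[of W m p q] by (simp add: algebra_simps)

lemma ladder_step:
  assumes V: "V \<in> Kerlap m p q" and m: "4 < m"
    and A: "inI m (V - Qn)" and B: "inI m (x_du m (u_dx m V) - const c * Qn)"
    and C: "inI m (ux m * du_dx m V - const k * Qn)"
  shows "inI m (Cf m p q V - ux m * Qn)"
    and "\<exists>c'. inI m (x_du m (u_dx m (Cf m p q V)) - const c' * (ux m * Qn))"
    and "\<exists>s. du_dx m (Cf m p q V) = const s * V"
proof -
  have VP: "V \<in> Pspace m p q" and L: "lap_x m V = 0" "lap_u m V = 0" using V by (auto simp: Kerlap_def)
  define a where "a = ci m p"
  define b where "b = ci m q"
  have "Cf m p q V - ux m * Qn = normx m * (const a * (const b * (normu m * du_dx m V)) - const a * u_dx m V)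
     + normu m * (- const b * x_du m V) + ux m * (V - Qn)"
    by (simp add: Cf_def a_def b_def algebra_simps del: const_mult_const)
  then show "inI m (Cf m p q V - ux m * Qn)"
    by (simp add: inI_add inI_diff inI_mult A)
  define s where "s = 2 + (1 - 2 * a - 2 * b) * c + 2 * b * (of_nat p - of_nat q) + 4 * a * b * k"
  obtain A1 B1 where XY1: "x_du m (u_dx m (Cf m p q V)) =
     2 * (ux m * V) + ux m * x_du m (u_dx m V) - 2 * const a * (ux m * x_du m (u_dx m V))
     - 2 * const b * (ux m * u_dx m (x_du m V))
     + 4 * const a * const b * (ux m * (ux m * du_dx m V)) + normx m * A1 + normu m * B1"
    using XY_Cf[of m p q V] unfolding a_def b_def by blast
  have "x_du m (u_dx m (Cf m p q V)) - const s * (ux m * Qn) =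
     normx m * A1 + normu m * B1 + ux m * ((2 + 2 * const b * (of_nat p - of_nat q)) * (V - Qn)
       + (1 - 2 * const a - 2 * const b) * (x_du m (u_dx m V) - const c * Qn)
       + 4 * const a * const b * (ux m * du_dx m V - const k * Qn))"
    unfolding XY1 YX_eq[OF VP] s_def const_hom
    by (simp add: algebra_simps del: const_mult_const)
  then have "inI m (x_du m (u_dx m (Cf m p q V)) - const s * (ux m * Qn))"
    by (simp add: inI_add inI_diff inI_mult A B C)
  then show "\<exists>c'. inI m (x_du m (u_dx m (Cf m p q V)) - const c' * (ux m * Qn))" by blast
  define s2 where "s2 = of_nat m + of_nat p + of_nat q + 2 * b * (of_nat p - of_nat q)
     - (2 * a + 2 * b) * c + (1 + 4 * a * b) * k"
  obtain A2 B2 where D1: "du_dx m (Cf m p q V) =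
     of_nat m * V + Ex_op m V + Eu_op m V + ux m * du_dx m V
     - 2 * const a * x_du m (u_dx m V) - 2 * const b * u_dx m (x_du m V)
     + 4 * const a * const b * (ux m * du_dx m V) + normx m * A2 + normu m * B2"
    using D_Cf[of m p q V] unfolding a_def b_def by blast
  have "du_dx m (Cf m p q V) - const s2 * V =
     normx m * A2 + normu m * B2
     - (2 * const a + 2 * const b) * (x_du m (u_dx m V) - const c * Qn)
     - (2 * const a + 2 * const b) * const c * (Qn - V)
     + (1 + 4 * const a * const b) * (ux m * du_dx m V - const k * Qn)
     + (1 + 4 * const a * const b) * const k * (Qn - V)"
    unfolding D1 YX_eq[OF VP] Ex_Pspace[OF VP] Eu_Pspace[OF VP] s2_def const_hom
    by (simp add: algebra_simps del: const_mult_const)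
  moreover have "inI m (Qn - V)" using inI_uminus[OF A] by simp
  ultimately have I2: "inI m (du_dx m (Cf m p q V) - const s2 * V)"
    by (simp add: inI_add inI_diff inI_mult A B C)
  have K1: "du_dx m (Cf m p q V) \<in> Kerlap m p q"
    using D_Kerlap[OF Cf_Kerlap[OF V m]] by simp
  have "du_dx m (Cf m p q V) = const s2 * V"
    by (rule kerI_eq[OF _ _ _ _ I2]) (use K1 Kerlap_const[OF V] in \<open>auto simp: Kerlap_def\<close>)
  then show "\<exists>s. du_dx m (Cf m p q V) = const s * V" by blast
qed


lemma ladder:
  assumes G0: "G0 \<in> Kerlap m p0 q0" "du_dx m G0 = 0" "x_du m (u_dx m G0) = const c0 * G0" and m: "4 < m"
  shows "inI m (c_iter m n p0 q0 G0 - ux m ^ n * G0)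
    \<and> (\<exists>c. inI m (x_du m (u_dx m (c_iter m n p0 q0 G0)) - const c * (ux m ^ n * G0)))
    \<and> (\<exists>k. inI m (ux m * du_dx m (c_iter m n p0 q0 G0) - const k * (ux m ^ n * G0)))"
proof (induction n)
  case 0
  have 1: "inI m (c_iter m 0 p0 q0 G0 - ux m ^ 0 * G0)" by simp
  have 2: "inI m (x_du m (u_dx m (c_iter m 0 p0 q0 G0)) - const c0 * (ux m ^ 0 * G0))" using G0(3) by simp
  have 3: "inI m (ux m * du_dx m (c_iter m 0 p0 q0 G0) - const 0 * (ux m ^ 0 * G0))" using G0(2) by simp
  show ?case using 1 2 3 by blast
next
  case (Suc n)
  let ?V = "c_iter m n p0 q0 G0"
  let ?Qn = "ux m ^ n * G0"
  from Suc obtain c k where A: "inI m (?V - ?Qn)" and B: "inI m (x_du m (u_dx m ?V) - const c * ?Qn)"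
    and C: "inI m (ux m * du_dx m ?V - const k * ?Qn)" by blast
  have V: "?V \<in> Kerlap m (p0 + n) (q0 + n)" and W': "c_iter m (Suc n) p0 q0 G0 = Cf m (p0 + n) (q0 + n) ?V"
    using c_iter_props[OF G0(1) m] by auto
  note st = ladder_step[OF V m A B C]
  have Qs: "ux m * ?Qn = ux m ^ Suc n * G0" by (simp add: mult.assoc)
  have 1: "inI m (c_iter m (Suc n) p0 q0 G0 - ux m ^ Suc n * G0)"
    using st(1) by (simp only: W' Qs[symmetric])
  have 2: "\<exists>c. inI m (x_du m (u_dx m (c_iter m (Suc n) p0 q0 G0)) - const c * (ux m ^ Suc n * G0))"
    using st(2) by (simp only: W' Qs[symmetric])
  obtain s where s: "du_dx m (Cf m (p0 + n) (q0 + n) ?V) = const s * ?V" using st(3) by blast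
  have "ux m * du_dx m (c_iter m (Suc n) p0 q0 G0) - const s * (ux m ^ Suc n * G0)
      = const s * (ux m * (?V - ?Qn))"
    unfolding W' s by (simp add: algebra_simps del: const_mult_const c_iter.simps)
  then have 3: "inI m (ux m * du_dx m (c_iter m (Suc n) p0 q0 G0) - const s * (ux m ^ Suc n * G0))"
    by (simp add: inI_mult A)
  show ?case using 1 2 3 by blast
qed

lemma ladder_D:
  assumes G0: "G0 \<in> Kerlap m p0 q0" "du_dx m G0 = 0" "x_du m (u_dx m G0) = const c0 * G0" and m: "4 < m"
  shows "\<exists>s. du_dx m (c_iter m (Suc n) p0 q0 G0) = const s * c_iter m n p0 q0 G0"
proof -
  let ?V = "c_iter m n p0 q0 G0"
  let ?Qn = "ux m ^ n * G0"
  from ladder[OF G0 m, of n] obtain c k where A: "inI m (?V - ?Qn)" and B: "inI m (x_du m (u_dx m ?V) - const c * ?Qn)"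
    and C: "inI m (ux m * du_dx m ?V - const k * ?Qn)" by blast
  have V: "?V \<in> Kerlap m (p0 + n) (q0 + n)" and W': "c_iter m (Suc n) p0 q0 G0 = Cf m (p0 + n) (q0 + n) ?V"
    using c_iter_props[OF G0(1) m] by auto
  show ?thesis using ladder_step(3)[OF V m A B C] W' by simp
qed

lemma fischer_Cf:
  assumes "lap_x m F = 0" "lap_u m F = 0"
  shows "fischer F (Cf m p q W) = fischer (du_dx m F) W"
  unfolding Cf_def
  by (simp add: fischer_add_right fischer_diff_right fischer_const_right fischer_N_right
      fischer_M_right fischer_Q_right assms del: const_mult_const)

lemma c_iter_lap:
  assumes G0: "G0 \<in> Kerlap m p0 q0" and m: "4 < m"
  shows "lap_x m (c_iter m n p0 q0 G0) = 0" "lap_u m (c_iter m n p0 q0 G0) = 0"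
  using c_iter_props[OF G0 m, of n] by (auto simp: Kerlap_def)

lemma orth_levels:
  assumes F0: "F0 \<in> Kerlap m pF qF" "du_dx m F0 = 0" "x_du m (u_dx m F0) = const cF * F0"
    and G0: "G0 \<in> Kerlap m pG qG"
    and m: "4 < m"
  shows "i < i' \<Longrightarrow> fischer (c_iter m i pF qF F0) (c_iter m i' pG qG G0) = 0"
proof (induction i arbitrary: i')
  case 0
  then obtain i'' where i': "i' = Suc i''" by (cases i') auto
  have "fischer (c_iter m 0 pF qF F0) (c_iter m i' pG qG G0)
     = fischer F0 (Cf m (pG + i'') (qG + i'') (c_iter m i'' pG qG G0))"
    using c_iter_props[OF G0 m, of i''] i' by simp
  also have "\<dots> = fischer (du_dx m F0) (c_iter m i'' pG qG G0)"
    by (rule fischer_Cf) (use F0(1) in \<open>auto simp: Kerlap_def\<close>)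
  finally show ?case using F0(2) by simp
next
  case (Suc i)
  then obtain i'' where i': "i' = Suc i''" and ii: "i < i''" by (cases i') auto
  obtain s where s: "du_dx m (c_iter m (Suc i) pF qF F0) = const s * c_iter m i pF qF F0"
    using ladder_D[OF F0 m] by blast
  have "fischer (c_iter m (Suc i) pF qF F0) (c_iter m i' pG qG G0)
     = fischer (c_iter m (Suc i) pF qF F0) (Cf m (pG + i'') (qG + i'') (c_iter m i'' pG qG G0))"
    using c_iter_props[OF G0 m, of i''] i' by simp
  also have "\<dots> = fischer (du_dx m (c_iter m (Suc i) pF qF F0)) (c_iter m i'' pG qG G0)"
    by (rule fischer_Cf; rule c_iter_lap[OF F0(1) m])
  also have "\<dots> = cnj s * fischer (c_iter m i pF qF F0) (c_iter m i'' pG qG G0)"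
    by (simp add: s fischer_const_left del: c_iter.simps)
  also have "\<dots> = 0" using Suc.IH[OF ii] by simp
  finally show ?case .
qed

lemma same_level:
  assumes F0: "F0 \<in> Kerlap m pF qF" "du_dx m F0 = 0" "x_du m (u_dx m F0) = const cF * F0"
    and G0: "G0 \<in> Kerlap m pG qG"
    and m: "4 < m"
  shows "\<exists>z. fischer (c_iter m i pF qF F0) (c_iter m i pG qG G0) = z * fischer F0 G0"
proof (induction i)
  case 0
  then show ?case by (intro exI[of _ 1]) simp
next
  case (Suc i)
  then obtain z where z: "fischer (c_iter m i pF qF F0) (c_iter m i pG qG G0) = z * fischer F0 G0" by blast
  obtain s where s: "du_dx m (c_iter m (Suc i) pF qF F0) = const s * c_iter m i pF qF F0"
    using ladder_D[OF F0 m] by blast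
  have "fischer (c_iter m (Suc i) pF qF F0) (c_iter m (Suc i) pG qG G0)
     = fischer (c_iter m (Suc i) pF qF F0) (Cf m (pG + i) (qG + i) (c_iter m i pG qG G0))"
    using c_iter_props[OF G0 m, of i] by simp
  also have "\<dots> = fischer (du_dx m (c_iter m (Suc i) pF qF F0)) (c_iter m i pG qG G0)"
    by (rule fischer_Cf; rule c_iter_lap[OF F0(1) m])
  also have "\<dots> = (cnj s * z) * fischer F0 G0"
    by (simp add: s fischer_const_left z del: c_iter.simps)
  finally show ?case by blast
qed


lemma Vsub_props:
  assumes m: "4 < m" and t: "(a, b, i, j) \<in> Idx k l" and P: "P \<in> Vsub m k l (a, b, i, j)"
  obtains H where "H \<in> Harm m (k - 2*a - i + j) (l - 2*b - i - j)"
    and "P = normx m ^ a * (normu m ^ b * c_iter m i (k - 2*a - i) (l - 2*b - i) ((u_dx m ^^ j) H))"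
    and "(u_dx m ^^ j) H \<in> Kerlap m (k - 2*a - i) (l - 2*b - i)"
    and "du_dx m ((u_dx m ^^ j) H) = 0"
    and "\<exists>c. x_du m (u_dx m ((u_dx m ^^ j) H)) = const c * (u_dx m ^^ j) H"
    and "c_iter m i (k - 2*a - i) (l - 2*b - i) ((u_dx m ^^ j) H) \<in> Kerlap m (k - 2*a) (l - 2*b)"
proof -
  let ?p = "k - 2*a" and ?q = "l - 2*b"
  have ij: "i \<le> ?p" "i \<le> ?q" "i + j \<le> ?q" "i + j \<le> ?p" using t by (auto simp: Idx_def)
  have "P \<in> {normx m ^ a * normu m ^ b * c_iter m i (?p - i) (?q - i) (su_iter m j (?p - i + j) (?q - i - j) H)
      | H. H \<in> Harm m (?p - i + j) (?q - i - j)}"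
    using P by (simp only: Vsub_def Let_def prod.case)
  then obtain H where H: "H \<in> Harm m (?p - i + j) (?q - i - j)"
    and PH: "P = normx m ^ a * normu m ^ b * c_iter m i (?p - i) (?q - i) (su_iter m j (?p - i + j) (?q - i - j) H)"
    by blast
  have F0: "(u_dx m ^^ j) H \<in> Kerlap m (?p - i) (?q - i)"
  proof -
    have e1: "?p - i + j - j = ?p - i" by simp
    have e2: "?q - i - j + j = ?q - i" using ij by arith
    show ?thesis using Yj_Kerlap[OF H, of j] unfolding e1 e2 .
  qed
  have D0: "du_dx m ((u_dx m ^^ j) H) = 0" using Yj_props[OF H, of j] by blast
  have XY0: "\<exists>c. x_du m (u_dx m ((u_dx m ^^ j) H)) = const c * (u_dx m ^^ j) H"
    using XYj[OF H, of j] by simp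
  have Fc: "c_iter m i (?p - i) (?q - i) ((u_dx m ^^ j) H) \<in> Kerlap m ?p ?q"
  proof -
    have e1: "?p - i + i = ?p" "?q - i + i = ?q" using ij by arith+
    show ?thesis using conjunct1[OF c_iter_props[OF F0 m, of i]] unfolding e1 .
  qed
  have "P = normx m ^ a * (normu m ^ b * c_iter m i (?p - i) (?q - i) ((u_dx m ^^ j) H))"
    using PH su_iter_eq[OF H] by (simp add: mult.assoc)
  then show ?thesis using that H F0 D0 XY0 Fc by (simp add: add.commute)
qed

lemma orth_Na:
  assumes "lap_x m F = 0" "F \<in> Pspace m p q" "a < a'"
  shows "fischer (normx m ^ a * (normu m ^ b * F)) (normx m ^ a' * Z) = 0"
proof -
  have R: "lap_x m (normu m ^ b * F) = 0" "normu m ^ b * F \<in> Pspace m p (q + 2 * b)"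
    using assms by (auto simp: lapx_Mpow intro: Mpow_Pspace)
  obtain c where c: "(lap_x m ^^ a') (normx m ^ a * (normu m ^ b * F))
      = (if a' \<le> a then const c * (normx m ^ (a - a') * (normu m ^ b * F)) else 0)"
    using lapx_pow_Npow[OF R] by blast
  show ?thesis using assms(3) by (simp add: fischer_Npow_right c)
qed

lemma orth_Mb:
  assumes "lap_u m F = 0" "F \<in> Pspace m p q" "b < b'"
  shows "fischer (normx m ^ a * (normu m ^ b * F)) (normu m ^ b' * Z) = 0"
proof -
  obtain c where c: "(lap_u m ^^ b') (normu m ^ b * F)
      = (if b' \<le> b then const c * (normu m ^ (b - b') * F) else 0)"
    using lapu_pow_Mpow[OF assms(1,2)] by blast
  show ?thesis using assms(3) by (simp add: fischer_Mpow_right lapu_pow_Npow c)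
qed

lemma same_N:
  assumes "lap_x m R = 0" "R \<in> Pspace m p q"
  shows "\<exists>z. fischer (normx m ^ a * R) (normx m ^ a * R') = z * fischer R R'"
proof -
  obtain c where c: "(lap_x m ^^ a) (normx m ^ a * R) = (if a \<le> a then const c * (normx m ^ (a - a) * R) else 0)"
    using lapx_pow_Npow[OF assms] by blast
  have "fischer (normx m ^ a * R) (normx m ^ a * R') = cnj c * fischer R R'"
    by (simp add: fischer_Npow_right c fischer_const_left)
  then show ?thesis by blast
qed

lemma same_M:
  assumes "lap_u m R = 0" "R \<in> Pspace m p q"
  shows "\<exists>z. fischer (normu m ^ b * R) (normu m ^ b * R') = z * fischer R R'"
proof -
  obtain c where c: "(lap_u m ^^ b) (normu m ^ b * R) = (if b \<le> b then const c * (normu m ^ (b - b) * R) else 0)"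
    using lapu_pow_Mpow[OF assms] by blast
  have "fischer (normu m ^ b * R) (normu m ^ b * R') = cnj c * fischer R R'"
    by (simp add: fischer_Mpow_right c fischer_const_left)
  then show ?thesis by blast
qed

lemma orth_Yj:
  assumes H: "H \<in> Harm m p0 q0" and H': "H' \<in> Harm m p1 q1" and j: "j < j'"
  shows "fischer ((u_dx m ^^ j) H) ((u_dx m ^^ j') H') = 0"
proof -
  obtain c where c: "(x_du m ^^ j') ((u_dx m ^^ j) H) = (if j' \<le> j then const c * (u_dx m ^^ (j - j')) H else 0)"
    using Xpow_Yj[OF H] by blast
  have "fischer ((u_dx m ^^ j') H') ((u_dx m ^^ j) H) = 0"
    using j by (simp add: fischer_Ypow_left c)
  then show ?thesis by (metis fischer_cnj complex_cnj_zero)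
qed

theorem corollary6p1:
  fixes m k l :: nat
  assumes "m > 4"
    and "t \<in> Idx k l" and "t' \<in> Idx k l" and "t \<noteq> t'"
    and "P \<in> Vsub m k l t" and "Q \<in> Vsub m k l t'"
  shows "fischer P Q = 0"
proof -
  have m: "4 < m" using assms(1) by simp
  obtain a b i j where t: "t = (a, b, i, j)" by (cases t) auto
  obtain a' b' i' j' where t': "t' = (a', b', i', j')" by (cases t') auto
  obtain H where H: "H \<in> Harm m (k - 2*a - i + j) (l - 2*b - i - j)"
    and PP: "P = normx m ^ a * (normu m ^ b * c_iter m i (k - 2*a - i) (l - 2*b - i) ((u_dx m ^^ j) H))"
    and F0K: "(u_dx m ^^ j) H \<in> Kerlap m (k - 2*a - i) (l - 2*b - i)"
    and F0D: "du_dx m ((u_dx m ^^ j) H) = 0"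
    and F0X: "\<exists>c. x_du m (u_dx m ((u_dx m ^^ j) H)) = const c * (u_dx m ^^ j) H"
    and FcK: "c_iter m i (k - 2*a - i) (l - 2*b - i) ((u_dx m ^^ j) H) \<in> Kerlap m (k - 2*a) (l - 2*b)"
    using Vsub_props[OF m, of a b i j k l P] assms t by auto
  obtain H' where H': "H' \<in> Harm m (k - 2*a' - i' + j') (l - 2*b' - i' - j')"
    and QQ: "Q = normx m ^ a' * (normu m ^ b' * c_iter m i' (k - 2*a' - i') (l - 2*b' - i') ((u_dx m ^^ j') H'))"
    and G0K: "(u_dx m ^^ j') H' \<in> Kerlap m (k - 2*a' - i') (l - 2*b' - i')"
    and G0D: "du_dx m ((u_dx m ^^ j') H') = 0"
    and G0X: "\<exists>c. x_du m (u_dx m ((u_dx m ^^ j') H')) = const c * (u_dx m ^^ j') H'"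
    and GcK: "c_iter m i' (k - 2*a' - i') (l - 2*b' - i') ((u_dx m ^^ j') H') \<in> Kerlap m (k - 2*a') (l - 2*b')"
    using Vsub_props[OF m, of a' b' i' j' k l Q] assms t' by auto
  obtain cF where cF: "x_du m (u_dx m ((u_dx m ^^ j) H)) = const cF * (u_dx m ^^ j) H" using F0X by blast
  obtain cG where cG: "x_du m (u_dx m ((u_dx m ^^ j') H')) = const cG * (u_dx m ^^ j') H'" using G0X by blast
  define F0 where "F0 = (u_dx m ^^ j) H"
  define G0 where "G0 = (u_dx m ^^ j') H'"
  define Fc where "Fc = c_iter m i (k - 2*a - i) (l - 2*b - i) F0"
  define Gc where "Gc = c_iter m i' (k - 2*a' - i') (l - 2*b' - i') G0"
  have PP': "P = normx m ^ a * (normu m ^ b * Fc)" using PP by (simp add: Fc_def F0_def)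
  have QQ': "Q = normx m ^ a' * (normu m ^ b' * Gc)" using QQ by (simp add: Gc_def G0_def)
  have FcL: "lap_x m Fc = 0" "lap_u m Fc = 0" "Fc \<in> Pspace m (k - 2*a) (l - 2*b)"
    using FcK by (auto simp: Fc_def F0_def Kerlap_def)
  have GcL: "lap_x m Gc = 0" "lap_u m Gc = 0" "Gc \<in> Pspace m (k - 2*a') (l - 2*b')"
    using GcK by (auto simp: Gc_def G0_def Kerlap_def)
  show ?thesis
  proof (cases "a = a' \<and> b = b'")
    case False
    consider "a < a'" | "a' < a" | "a = a'" "b < b'" | "a = a'" "b' < b" using False by linarith
    then show ?thesis
    proof cases
      case 1
      then show ?thesis unfolding PP' QQ' by (rule orth_Na[OF FcL(1) FcL(3)])
    next
      case 2
      have "fischer Q P = 0" unfolding PP' QQ' using 2 by (rule orth_Na[OF GcL(1) GcL(3)])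
      then show ?thesis by (metis fischer_cnj complex_cnj_zero)
    next
      case 3
      have QQ2: "Q = normu m ^ b' * (normx m ^ a' * Gc)" using QQ' by (simp add: ac_simps)
      show ?thesis unfolding PP' QQ2 using 3(2) by (rule orth_Mb[OF FcL(2) FcL(3)])
    next
      case 4
      have PP2: "P = normu m ^ b * (normx m ^ a * Fc)" using PP' by (simp add: ac_simps)
      have "fischer Q P = 0" unfolding QQ' PP2 using 4(2) by (rule orth_Mb[OF GcL(2) GcL(3)])
      then show ?thesis by (metis fischer_cnj complex_cnj_zero)
    qed
  next
    case True
    then have aa: "a' = a" "b' = b" by auto
    have ij: "(i, j) \<noteq> (i', j')" using assms(4) t t' True by auto
    have R: "lap_x m (normu m ^ b * Fc) = 0" "normu m ^ b * Fc \<in> Pspace m (k - 2*a) (l - 2*b + 2 * b)"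
      using FcL by (auto simp: lapx_Mpow intro: Mpow_Pspace)
    obtain z1 where z1: "fischer P Q = z1 * fischer (normu m ^ b * Fc) (normu m ^ b * Gc)"
      using same_N[OF R, of a "normu m ^ b * Gc"] PP' QQ' aa by auto
    obtain z2 where z2: "fischer (normu m ^ b * Fc) (normu m ^ b * Gc) = z2 * fischer Fc Gc"
      using same_M[OF FcL(2) FcL(3), of b Gc] by auto
    have F0K': "F0 \<in> Kerlap m (k - 2*a - i) (l - 2*b - i)" using F0K by (simp add: F0_def)
    have G0K': "G0 \<in> Kerlap m (k - 2*a - i') (l - 2*b - i')" using G0K aa by (simp add: G0_def)
    have F0D': "du_dx m F0 = 0" "x_du m (u_dx m F0) = const cF * F0" using F0D cF by (simp_all add: F0_def)
    have G0D': "du_dx m G0 = 0" "x_du m (u_dx m G0) = const cG * G0" using G0D cG by (simp_all add: G0_def)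
    have Fc': "Fc = c_iter m i (k - 2*a - i) (l - 2*b - i) F0" by (simp add: Fc_def)
    have Gc': "Gc = c_iter m i' (k - 2*a - i') (l - 2*b - i') G0" by (simp add: Gc_def aa)
    have "fischer Fc Gc = 0"
    proof -
      have ij2: "i \<noteq> i' \<or> j \<noteq> j'" using ij by auto
      consider "i < i'" | "i' < i" | "i = i'" "j < j'" | "i = i'" "j' < j" using ij2 by linarith
      then show ?thesis
      proof cases
        case 1
        show ?thesis unfolding Fc' Gc' by (rule orth_levels[OF F0K' F0D' G0K' m 1])
      next
        case 2
        have "fischer Gc Fc = 0" unfolding Fc' Gc' by (rule orth_levels[OF G0K' G0D' F0K' m 2])
        then show ?thesis by (metis fischer_cnj complex_cnj_zero)
      next
        case 3
        obtain z where z: "fischer Fc Gc = z * fischer F0 G0"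
          using same_level[OF F0K' F0D' G0K' m, of i] 3(1) Fc' Gc' by auto
        have "fischer F0 G0 = 0" unfolding F0_def G0_def by (rule orth_Yj[OF H H' 3(2)])
        then show ?thesis using z by simp
      next
        case 4
        obtain z where z: "fischer Fc Gc = z * fischer F0 G0"
          using same_level[OF F0K' F0D' G0K' m, of i] 4(1) Fc' Gc' by auto
        have "fischer G0 F0 = 0" unfolding F0_def G0_def by (rule orth_Yj[OF H' H 4(2)])
        then have "fischer F0 G0 = 0" by (metis fischer_cnj complex_cnj_zero)
        then show ?thesis using z by simp
      qed
    qed
    then show ?thesis using z1 z2 by simp
  qed
qed


end
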